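(* Let $G$ be a finite multigraph (parallel edges allowed, no loops), let $k$ be a positive integer, and let $A$ be a proper subset of $V(G)$ such that between any two distinct vertices of $A$ there are $2k$ pairwise edge-disjoint paths in $G$. Assume that there is no edge of $G$ with both endvertices outside of $A$, and let $s$ be a vertex not in $A$ with $\deg(s) > 3$. Then the lifting graph $L(G,s,\tau_A)$ is either (a) a complete multipartite graph, or (b) the disjoint union of an isolated vertex and a complete bipartite graph whose two partition classes have equal size; in particular, this case can only occur if $\deg(s)$ is odd.
   Context: Lifting two distinct edges $sx, sy$ incident with $s$ means deleting them and adding a new edge $xy$ (possibly parallel to existing edges). $\lambda_G(x,y)$ denotes the maximum number of pairwise edge-disjoint $x$–$y$ paths in $G$. The target function $\tau_A$ is defined on pairs of vertices by $\tau_A(x,y) = 2k$ if $x,y \in A$ and $\tau_A(x,y)=0$ otherwise. A pair of edges incident with $s$ is $\tau_A$-admissible if after lifting them the resulting graph $G'$ satisfies $\lambda_{G'}(x,y) \geq \tau_A(x,y)$ for all distinct $x,y \in V(G)\setminus\{s\}$. The lifting graph $L(G,s,\tau_A)$ is the graph whose vertices are the edges incident with $s$, two of them being adjacent if and only if they form a $\tau_A$-admissible pair. *)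

theory Defs
  imports Main
begin

record ('v, 'e) mgraph =
  verts :: "'v set"
  edges :: "'e set"
  ends  :: "'e \<Rightarrow> 'v \<times> 'v"

definition multigraph :: "('v, 'e) mgraph \<Rightarrow> bool" where
  "multigraph G \<longleftrightarrow> finite (verts G) \<and> finite (edges G) \<and>
     (\<forall>e \<in> edges G. fst (ends G e) \<in> verts G \<and> snd (ends G e) \<in> verts G
                    \<and> fst (ends G e) \<noteq> snd (ends G e))"

definition joins :: "('v, 'e) mgraph \<Rightarrow> 'e \<Rightarrow> 'v \<Rightarrow> 'v \<Rightarrow> bool" where
  "joins G e x y \<longleftrightarrow> e \<in> edges G \<and> (ends G e = (x, y) \<or> ends G e = (y, x))"

definition is_path :: "('v, 'e) mgraph \<Rightarrow> 'v \<Rightarrow> 'v \<Rightarrow> 'v list \<times> 'e list \<Rightarrow> bool" where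
  "is_path G x y p \<longleftrightarrow> (case p of (vs, es) \<Rightarrow>
     length vs = Suc (length es) \<and> set vs \<subseteq> verts G \<and> distinct vs \<and>
     hd vs = x \<and> last vs = y \<and>
     (\<forall>i < length es. joins G (es ! i) (vs ! i) (vs ! Suc i)))"

definition edge_disjoint_paths :: "('v, 'e) mgraph \<Rightarrow> 'v \<Rightarrow> 'v \<Rightarrow> nat \<Rightarrow> bool" where
  "edge_disjoint_paths G x y n \<longleftrightarrow> (\<exists>ps :: ('v list \<times> 'e list) list.
     length ps = n \<and> (\<forall>p \<in> set ps. is_path G x y p) \<and>
     (\<forall>i < n. \<forall>j < n. i \<noteq> j \<longrightarrow> set (snd (ps ! i)) \<inter> set (snd (ps ! j)) = {}))"

definition lam :: "('v, 'e) mgraph \<Rightarrow> 'v \<Rightarrow> 'v \<Rightarrow> nat" where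
  "lam G x y = (GREATEST n. edge_disjoint_paths G x y n)"

definition incident_edges :: "('v, 'e) mgraph \<Rightarrow> 'v \<Rightarrow> 'e set" where
  "incident_edges G s = {e \<in> edges G. fst (ends G e) = s \<or> snd (ends G e) = s}"

definition degree :: "('v, 'e) mgraph \<Rightarrow> 'v \<Rightarrow> nat" where
  "degree G s = card (incident_edges G s)"

definition other_end :: "('v, 'e) mgraph \<Rightarrow> 'v \<Rightarrow> 'e \<Rightarrow> 'v" where
  "other_end G s e = (if fst (ends G e) = s then snd (ends G e) else fst (ends G e))"

text \<open>If x = y the new edge would be a loop,
  which is irrelevant for edge-disjoint paths, so it is simply omitted.\<close>
definition lift :: "('v, 'e) mgraph \<Rightarrow> 'v \<Rightarrow> 'e \<Rightarrow> 'e \<Rightarrow> ('v, 'e) mgraph" where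
  "lift G s e f =
     (let x = other_end G s e; y = other_end G s f in
      if x = y then G\<lparr>edges := edges G - {e, f}\<rparr>
      else G\<lparr>edges := edges G - {f}, ends := (ends G)(e := (x, y))\<rparr>)"

definition tau :: "'v set \<Rightarrow> nat \<Rightarrow> 'v \<Rightarrow> 'v \<Rightarrow> nat" where
  "tau A k x y = (if x \<in> A \<and> y \<in> A then 2 * k else 0)"

definition admissible :: "('v, 'e) mgraph \<Rightarrow> 'v \<Rightarrow> ('v \<Rightarrow> 'v \<Rightarrow> nat) \<Rightarrow> 'e \<Rightarrow> 'e \<Rightarrow> bool" where
  "admissible G s t e f \<longleftrightarrow> e \<in> incident_edges G s \<and> f \<in> incident_edges G s \<and> e \<noteq> f \<and>
     (\<forall>x \<in> verts G - {s}. \<forall>y \<in> verts G - {s}. x \<noteq> y \<longrightarrow> lam (lift G s e f) x y \<ge> t x y)"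

definition complete_multipartite :: "'a set \<Rightarrow> ('a \<Rightarrow> 'a \<Rightarrow> bool) \<Rightarrow> bool" where
  "complete_multipartite V adj \<longleftrightarrow> (\<exists>P. \<Union>P = V \<and> {} \<notin> P \<and>
      (\<forall>X \<in> P. \<forall>Y \<in> P. X \<noteq> Y \<longrightarrow> X \<inter> Y = {}) \<and>
      (\<forall>u \<in> V. \<forall>v \<in> V. adj u v \<longleftrightarrow> (\<forall>X \<in> P. \<not> (u \<in> X \<and> v \<in> X))))"

definition isolated_plus_balanced_bipartite :: "'a set \<Rightarrow> ('a \<Rightarrow> 'a \<Rightarrow> bool) \<Rightarrow> bool" where
  "isolated_plus_balanced_bipartite V adj \<longleftrightarrow> (\<exists>z X Y. z \<in> V \<and>
      V - {z} = X \<union> Y \<and> X \<inter> Y = {} \<and> z \<notin> X \<and> z \<notin> Y \<and> card X = card Y \<and>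
      (\<forall>u \<in> V. \<forall>v \<in> V. adj u v \<longleftrightarrow> (u \<in> X \<and> v \<in> Y \<or> u \<in> Y \<and> v \<in> X)))"

end

theory Submission
  imports Defs
begin


definition crosses :: "('e \<Rightarrow> 'v \<times> 'v) \<Rightarrow> 'v set \<Rightarrow> 'e \<Rightarrow> bool" where
  "crosses en T e \<longleftrightarrow> ((fst (en e) \<in> T) \<noteq> (snd (en e) \<in> T))"

definition cut_edges :: "('v, 'e) mgraph \<Rightarrow> 'v set \<Rightarrow> 'e set" where
  "cut_edges G X = {e \<in> edges G. crosses (ends G) X e}"

definition cutsz :: "('v, 'e) mgraph \<Rightarrow> 'v set \<Rightarrow> nat" where
  "cutsz G X = card (cut_edges G X)"

definition lk :: "('e \<Rightarrow> 'v \<times> 'v) \<Rightarrow> 'e set \<Rightarrow> ('v \<times> 'v) set" where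
  "lk en F = {(u, v). \<exists>e\<in>F. en e = (u, v) \<or> en e = (v, u)}"

abbreviation conn :: "('e \<Rightarrow> 'v \<times> 'v) \<Rightarrow> 'e set \<Rightarrow> 'v \<Rightarrow> 'v \<Rightarrow> bool" where
  "conn en F a b \<equiv> (a, b) \<in> (lk en F)\<^sup>*"

lemma conn_cut:
  assumes "conn en F a b" "a \<in> T" "b \<notin> T"
  shows "\<exists>e\<in>F. crosses en T e"
proof (rule ccontr)
  assume nc: "\<not> (\<exists>e\<in>F. crosses en T e)"
  have "b \<in> T" using assms(1)
  proof (induction rule: rtrancl_induct)
    case base then show ?case using assms(2) .
  next
    case (step y z)
    then obtain e where "e \<in> F" "en e = (y, z) \<or> en e = (z, y)" by (auto simp: lk_def)
    with nc step.IH show ?case by (auto simp: crosses_def)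
  qed
  with assms(3) show False by simp
qed

lemma lk_mono: "F \<subseteq> F' \<Longrightarrow> lk en F \<subseteq> lk en F'"
  by (auto simp: lk_def)

lemma conn_mono: "F \<subseteq> F' \<Longrightarrow> conn en F a b \<Longrightarrow> conn en F' a b"
  using rtrancl_mono[OF lk_mono] by blast

lemma lk_conv: "(lk en F)\<inverse> = lk en F"
  by (auto simp: lk_def)

lemma conn_sym: "conn en F a b \<Longrightarrow> conn en F b a"
  by (metis lk_conv rtrancl_converseI)

lemma lk_cong: "(\<And>e. e \<in> F \<Longrightarrow> en e = en' e) \<Longrightarrow> lk en F = lk en' F"
  by (auto simp: lk_def)

lemma conn_edge1: "e \<in> F \<Longrightarrow> en e = (u, v) \<Longrightarrow> conn en F u v"
  by (rule r_into_rtrancl) (auto simp: lk_def)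

lemma conn_edge2: "e \<in> F \<Longrightarrow> en e = (u, v) \<Longrightarrow> conn en F v u"
  by (rule r_into_rtrancl) (auto simp: lk_def)

lemma conn_only_cross:
  assumes cn: "conn en F a b" and ab: "a \<in> T" "b \<notin> T"
    and only: "\<forall>e\<in>F. crosses en T e \<longrightarrow> e = c" and cF: "c \<in> F"
    and cT: "crosses en T c"
  shows "conn en (F - {c}) a (if fst (en c) \<in> T then fst (en c) else snd (en c))"
proof -
  define R where "R = {v. conn en (F - {c}) a v}"
  have aR: "a \<in> R" by (simp add: R_def)
  have closed: "\<not> crosses en R e" if "e \<in> F - {c}" for e
  proof
    assume cr: "crosses en R e"
    obtain p q where pq: "en e = (p, q)" by force
    show False
    proof (cases "p \<in> R")
      case True
      then have "q \<notin> R" using cr pq by (simp add: crosses_def)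
      moreover have "conn en (F - {c}) p q" using that pq by (rule conn_edge1)
      ultimately show False using True by (auto simp: R_def intro: rtrancl_trans)
    next
      case False
      then have "q \<in> R" using cr pq by (simp add: crosses_def)
      moreover have "conn en (F - {c}) q p" using that pq by (rule conn_edge2)
      ultimately show False using False by (auto simp: R_def intro: rtrancl_trans)
    qed
  qed
  have RT: "R \<subseteq> T"
  proof
    fix v assume "v \<in> R"
    show "v \<in> T"
    proof (rule ccontr)
      assume "v \<notin> T"
      have "conn en (F - {c}) a v" using \<open>v \<in> R\<close> by (simp add: R_def)
      from conn_cut[OF this ab(1) \<open>v \<notin> T\<close>] obtain e where "e \<in> F - {c}" "crosses en T e"
        by blast
      with only show False by auto
    qed
  qed
  have "b \<notin> R" using RT ab by auto
  then obtain e where "e \<in> F" "crosses en R e" using conn_cut[OF cn aR] by auto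
  with closed have ec: "e = c" by auto
  show ?thesis
  proof (cases "fst (en c) \<in> T")
    case True
    then have "snd (en c) \<notin> T" using cT by (simp add: crosses_def)
    then have "snd (en c) \<notin> R" using RT by auto
    then have "fst (en c) \<in> R" using \<open>crosses en R e\<close> ec by (simp add: crosses_def)
    then show ?thesis using True by (simp add: R_def)
  next
    case False
    then have "fst (en c) \<notin> R" using RT by auto
    then have "snd (en c) \<in> R" using \<open>crosses en R e\<close> ec by (simp add: crosses_def)
    then show ?thesis using False by (simp add: R_def)
  qed
qed



lemma path_prefix:
  assumes "is_path G x y (vs, es)" "i < length vs"
  shows "is_path G x (vs ! i) (take (Suc i) vs, take i es)"
proof -
  have l: "length vs = Suc (length es)" and h: "hd vs = x"
    and j: "\<forall>i < length es. joins G (es ! i) (vs ! i) (vs ! Suc i)"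
    and sv: "set vs \<subseteq> verts G" and d: "distinct vs"
    using assms(1) by (auto simp: is_path_def)
  have lt: "length (take (Suc i) vs) = Suc (length (take i es))" using l assms(2) by simp
  have "last (take (Suc i) vs) = vs ! i"
    using assms(2) by (simp add: take_Suc_conv_app_nth)
  moreover have "hd (take (Suc i) vs) = x" using h assms(2) by (cases vs) auto
  moreover have "set (take (Suc i) vs) \<subseteq> verts G" using sv by (meson order_trans set_take_subset)
  moreover have "distinct (take (Suc i) vs)" using d by simp
  moreover have "\<forall>k < length (take i es). joins G (take i es ! k) (take (Suc i) vs ! k) (take (Suc i) vs ! Suc k)"
    using j by simp
  ultimately show ?thesis using lt by (simp add: is_path_def)
qed

lemma path_snoc:
  assumes "is_path G x y (vs, es)" "z \<notin> set vs" "z \<in> verts G" "joins G e y z"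
  shows "is_path G x z (vs @ [z], es @ [e])"
proof -
  have l: "length vs = Suc (length es)" and h: "hd vs = x" and la: "last vs = y"
    and j: "\<forall>i < length es. joins G (es ! i) (vs ! i) (vs ! Suc i)"
    and sv: "set vs \<subseteq> verts G" and d: "distinct vs"
    using assms(1) by (auto simp: is_path_def)
  have ne: "vs \<noteq> []" using l by auto
  have "\<forall>i < length (es @ [e]). joins G ((es @ [e]) ! i) ((vs @ [z]) ! i) ((vs @ [z]) ! Suc i)"
  proof (intro allI impI)
    fix i assume "i < length (es @ [e])"
    then have "i < length es \<or> i = length es" by auto
    then show "joins G ((es @ [e]) ! i) ((vs @ [z]) ! i) ((vs @ [z]) ! Suc i)"
    proof
      assume "i < length es" then show ?thesis using j l by (auto simp: nth_append)
    next
      assume "i = length es"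
      moreover have "vs ! length es = y" using la l ne by (simp add: last_conv_nth)
      ultimately show ?thesis using assms(4) l by (auto simp: nth_append)
    qed
  qed
  then show ?thesis using l h ne sv d assms(2,3) by (auto simp: is_path_def)
qed

lemma conn_path:
  assumes mg: "multigraph G" and F: "F \<subseteq> edges G" and a: "a \<in> verts G"
    and cn: "conn (ends G) F a b"
  shows "\<exists>vs es. is_path G a b (vs, es) \<and> set es \<subseteq> F"
  using cn
proof (induction rule: rtrancl_induct)
  case base
  have "is_path G a a ([a], [])" using a by (simp add: is_path_def)
  then show ?case by (intro exI[of _ "[a]"] exI[of _ "[]"]) simp
next
  case (step y z)
  obtain vs es where p: "is_path G a y (vs, es)" and esF: "set es \<subseteq> F" using step.IH by blast
  from step.hyps(2) obtain e where e: "e \<in> F" "ends G e = (y, z) \<or> ends G e = (z, y)"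
    by (auto simp: lk_def)
  have eE: "e \<in> edges G" using e F by auto
  have "fst (ends G e) \<in> verts G \<and> snd (ends G e) \<in> verts G" using mg eE by (simp add: multigraph_def)
  then have zV: "z \<in> verts G" using e(2) by auto
  have jn: "joins G e y z" using e eE by (auto simp: joins_def)
  show ?case
  proof (cases "z \<in> set vs")
    case True
    then obtain i where i: "i < length vs" "vs ! i = z" by (auto simp: in_set_conv_nth)
    have "is_path G a z (take (Suc i) vs, take i es)" using path_prefix[OF p i(1)] i(2) by simp
    moreover have "set (take i es) \<subseteq> F" using esF by (meson order_trans set_take_subset)
    ultimately show ?thesis by blast
  next
    case False
    have "is_path G a z (vs @ [z], es @ [e])" by (rule path_snoc[OF p False zV jn])
    moreover have "set (es @ [e]) \<subseteq> F" using esF e by auto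
    ultimately show ?thesis by blast
  qed
qed

lemma list_cross:
  assumes "P (f 0)" "\<not> P (f n)"
  shows "\<exists>i < n. P (f i) \<and> \<not> P (f (Suc i))"
  using assms
proof (induction n)
  case 0 then show ?case by simp
next
  case (Suc n)
  then show ?case by (cases "P (f n)") (auto intro: less_SucI)
qed

lemma path_crosses:
  assumes "is_path G x y (vs, es)" "x \<in> X" "y \<notin> X"
  shows "\<exists>e \<in> set es. e \<in> cut_edges G X"
proof -
  have l: "length vs = Suc (length es)" and h: "hd vs = x" and la: "last vs = y"
    and j: "\<forall>i < length es. joins G (es ! i) (vs ! i) (vs ! Suc i)"
    using assms(1) by (auto simp: is_path_def)
  have ne: "vs \<noteq> []" using l by auto
  have "vs ! 0 \<in> X" using h ne assms(2) by (simp add: hd_conv_nth)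
  moreover have "vs ! length es \<notin> X" using la l ne assms(3) by (simp add: last_conv_nth)
  ultimately obtain i where i: "i < length es" "vs ! i \<in> X" "vs ! Suc i \<notin> X"
    using list_cross[of "\<lambda>v. v \<in> X" "\<lambda>i. vs ! i" "length es"] by auto
  have "joins G (es ! i) (vs ! i) (vs ! Suc i)" using j i by auto
  then have "es ! i \<in> cut_edges G X" using i
    by (auto simp: joins_def cut_edges_def crosses_def)
  then show ?thesis using i(1) by auto
qed

lemma edp_le_cut:
  assumes mg: "multigraph G" and edp: "edge_disjoint_paths G x y n" and X: "x \<in> X" "y \<notin> X"
  shows "n \<le> cutsz G X"
proof -
  obtain ps where ps: "length ps = n" "\<forall>p\<in>set ps. is_path G x y p"
    "\<forall>i<n. \<forall>j<n. i \<noteq> j \<longrightarrow> set (snd (ps ! i)) \<inter> set (snd (ps ! j)) = {}"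
    using edp by (auto simp: edge_disjoint_paths_def)
  have ex: "\<forall>i<n. \<exists>e. e \<in> set (snd (ps ! i)) \<and> e \<in> cut_edges G X"
  proof (intro allI impI)
    fix i assume "i < n"
    then have "ps ! i \<in> set ps" using ps(1) by auto
    then have "is_path G x y (fst (ps ! i), snd (ps ! i))" using ps(2) by auto
    from path_crosses[OF this X] show "\<exists>e. e \<in> set (snd (ps ! i)) \<and> e \<in> cut_edges G X"
      by auto
  qed
  define c where "c i = (SOME e. e \<in> set (snd (ps ! i)) \<and> e \<in> cut_edges G X)" for i
  have c: "\<forall>i<n. c i \<in> set (snd (ps ! i)) \<and> c i \<in> cut_edges G X"
  proof (intro allI impI)
    fix i assume "i < n"
    then have "\<exists>e. e \<in> set (snd (ps ! i)) \<and> e \<in> cut_edges G X" using ex by simp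
    then show "c i \<in> set (snd (ps ! i)) \<and> c i \<in> cut_edges G X"
      unfolding c_def by (rule someI_ex)
  qed
  have inj: "inj_on c {..<n}"
  proof (rule inj_onI)
    fix i j assume ij: "i \<in> {..<n}" "j \<in> {..<n}" "c i = c j"
    show "i = j"
    proof (rule ccontr)
      assume "i \<noteq> j"
      then have "set (snd (ps ! i)) \<inter> set (snd (ps ! j)) = {}" using ps(3) ij by auto
      moreover have "c i \<in> set (snd (ps ! i))" "c j \<in> set (snd (ps ! j))" using c ij by auto
      ultimately show False using ij(3) by auto
    qed
  qed
  have fin: "finite (cut_edges G X)" using mg by (auto simp: multigraph_def cut_edges_def)
  have "card (c ` {..<n}) \<le> card (cut_edges G X)"
    using c fin by (intro card_mono) auto
  then show ?thesis using card_image[OF inj] by (simp add: cutsz_def)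
qed

lemma edp_mono:
  assumes "edge_disjoint_paths G x y n" "m \<le> n"
  shows "edge_disjoint_paths G x y m"
proof -
  obtain ps where ps: "length ps = n" "\<forall>p\<in>set ps. is_path G x y p"
    "\<forall>i<n. \<forall>j<n. i \<noteq> j \<longrightarrow> set (snd (ps ! i)) \<inter> set (snd (ps ! j)) = {}"
    using assms(1) by (auto simp: edge_disjoint_paths_def)
  show ?thesis unfolding edge_disjoint_paths_def
  proof (rule exI[of _ "take m ps"], intro conjI)
    show "length (take m ps) = m" using ps(1) assms(2) by simp
    show "\<forall>p\<in>set (take m ps). is_path G x y p" using ps(2) by (meson in_set_takeD)
    show "\<forall>i<m. \<forall>j<m. i \<noteq> j \<longrightarrow> set (snd (take m ps ! i)) \<inter> set (snd (take m ps ! j)) = {}"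
      using ps(3) assms(2) by simp
  qed
qed

lemma cutsz_le_edges:
  assumes "multigraph G"
  shows "cutsz G X \<le> card (edges G)"
  using assms unfolding cutsz_def cut_edges_def multigraph_def
  by (intro card_mono) auto

lemma lam_ge_iff_edp:
  assumes mg: "multigraph G" and xy: "x \<noteq> y"
  shows "n \<le> lam G x y \<longleftrightarrow> edge_disjoint_paths G x y n"
proof -
  have bound: "\<forall>m. edge_disjoint_paths G x y m \<longrightarrow> m \<le> card (edges G)"
  proof (intro allI impI)
    fix m assume "edge_disjoint_paths G x y m"
    then have "m \<le> cutsz G {x}" using edp_le_cut[OF mg] xy by blast
    then show "m \<le> card (edges G)" using cutsz_le_edges[OF mg, of "{x}"] by linarith
  qed
  have z: "edge_disjoint_paths G x y 0" by (simp add: edge_disjoint_paths_def)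
  have g: "edge_disjoint_paths G x y (lam G x y)"
    unfolding lam_def by (rule GreatestI_nat[where P="edge_disjoint_paths G x y", OF z]) (use bound in blast)
  show ?thesis
  proof
    assume "n \<le> lam G x y" then show "edge_disjoint_paths G x y n" using edp_mono[OF g] by blast
  next
    assume "edge_disjoint_paths G x y n"
    then show "n \<le> lam G x y" unfolding lam_def by (rule Greatest_le_nat[where P="edge_disjoint_paths G x y"]) (use bound in blast)
  qed
qed

lemma lam_le_cut:
  assumes mg: "multigraph G" and xy: "x \<noteq> y" "x \<in> X" "y \<notin> X" and n: "n \<le> lam G x y"
  shows "n \<le> cutsz G X"
  using edp_le_cut[OF mg _ xy(2,3)] lam_ge_iff_edp[OF mg xy(1)] n by blast



definition cm :: "'v set \<Rightarrow> 'v \<Rightarrow> 'v \<Rightarrow> 'v" where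
  "cm S w v = (if v \<in> S then w else v)"

definition contr :: "('v, 'e) mgraph \<Rightarrow> 'v set \<Rightarrow> 'v \<Rightarrow> ('v, 'e) mgraph" where
  "contr G S w = G\<lparr>verts := (verts G - S) \<union> {w},
     edges := {e \<in> edges G. fst (ends G e) \<notin> S \<or> snd (ends G e) \<notin> S},
     ends := (\<lambda>e. (cm S w (fst (ends G e)), cm S w (snd (ends G e))))\<rparr>"

lemma contr_simps:
  "verts (contr G S w) = (verts G - S) \<union> {w}"
  "edges (contr G S w) = {e \<in> edges G. fst (ends G e) \<notin> S \<or> snd (ends G e) \<notin> S}"
  "ends (contr G S w) = (\<lambda>e. (cm S w (fst (ends G e)), cm S w (snd (ends G e))))"
  by (simp_all add: contr_def)

lemma mg_ends:
  assumes "multigraph G" "e \<in> edges G"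
  shows "fst (ends G e) \<in> verts G" "snd (ends G e) \<in> verts G" "fst (ends G e) \<noteq> snd (ends G e)"
  using assms by (auto simp: multigraph_def)

lemma mg_fin: "multigraph G \<Longrightarrow> finite (verts G)" "multigraph G \<Longrightarrow> finite (edges G)"
  by (auto simp: multigraph_def)

lemma contr_mg:
  assumes mg: "multigraph G" and w: "w \<in> S"
  shows "multigraph (contr G S w)"
  unfolding multigraph_def contr_simps
proof (intro conjI ballI)
  show "finite (verts G - S \<union> {w})" using mg_fin[OF mg] by simp
  show "finite {e \<in> edges G. fst (ends G e) \<notin> S \<or> snd (ends G e) \<notin> S}" using mg_fin[OF mg] by simp
next
  fix e assume e: "e \<in> {e \<in> edges G. fst (ends G e) \<notin> S \<or> snd (ends G e) \<notin> S}"
  then have eE: "e \<in> edges G" by simp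
  note m = mg_ends[OF mg eE]
  show "fst (cm S w (fst (ends G e)), cm S w (snd (ends G e))) \<in> verts G - S \<union> {w}"
    using m by (auto simp: cm_def)
  show "snd (cm S w (fst (ends G e)), cm S w (snd (ends G e))) \<in> verts G - S \<union> {w}"
    using m by (auto simp: cm_def)
  show "fst (cm S w (fst (ends G e)), cm S w (snd (ends G e))) \<noteq>
        snd (cm S w (fst (ends G e)), cm S w (snd (ends G e)))"
    using m e w by (auto simp: cm_def)
qed

lemma cut_restrict:
  assumes "multigraph G"
  shows "cut_edges G X = cut_edges G (X \<inter> verts G)"
  using assms by (auto simp: cut_edges_def crosses_def multigraph_def)

lemma contr_cut:
  assumes mg: "multigraph G" and w: "w \<in> S" and Z: "Z \<subseteq> verts (contr G S w)"
  shows "cut_edges (contr G S w) Z = cut_edges G ((Z - {w}) \<union> (if w \<in> Z then S else {}))"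
proof -
  let ?Z' = "(Z - {w}) \<union> (if w \<in> Z then S else {})"
  have mem: "cm S w v \<in> Z \<longleftrightarrow> v \<in> ?Z'" for v
    using Z w by (auto simp: cm_def contr_simps)
  show ?thesis
  proof -
    have ZS: "v \<in> S \<Longrightarrow> v \<in> Z \<Longrightarrow> v = w" for v using Z by (auto simp: contr_simps)
    have inS: "v \<in> S \<Longrightarrow> (v \<in> ?Z' \<longleftrightarrow> w \<in> Z)" for v using ZS by auto
    have nc: "\<not> crosses (ends G) ?Z' e" if "fst (ends G e) \<in> S" "snd (ends G e) \<in> S" for e
      using inS[OF that(1)] inS[OF that(2)] by (simp add: crosses_def)
    show ?thesis
    proof (rule set_eqI)
      fix e
      show "e \<in> cut_edges (contr G S w) Z \<longleftrightarrow> e \<in> cut_edges G ?Z'"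
        unfolding cut_edges_def contr_simps crosses_def fst_conv snd_conv mem mem_Collect_eq
        using nc[of e] unfolding crosses_def by blast
    qed
  qed
qed

lemma crosses_contr:
  assumes "\<forall>v\<in>S. (v \<in> T \<longleftrightarrow> w \<in> T)"
  shows "crosses (ends (contr G S w)) T e \<longleftrightarrow> crosses (ends G) T e"
proof -
  have "cm S w v \<in> T \<longleftrightarrow> v \<in> T" for v using assms by (auto simp: cm_def)
  then show ?thesis by (simp add: crosses_def contr_simps)
qed

lemma del_mg: "multigraph G \<Longrightarrow> multigraph (G\<lparr>edges := edges G - D\<rparr>)"
  by (auto simp: multigraph_def)

lemma cut_del: "cut_edges (G\<lparr>edges := edges G - D\<rparr>) X = cut_edges G X - D"
  by (auto simp: cut_edges_def)



lemma pick_unique: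
  assumes fin: "finite C" and cn: "card C = n"
    and D: "\<forall>i<n. \<forall>j<n. i \<noteq> j \<longrightarrow> F i \<inter> F j = {}"
    and ne: "\<forall>i<n. F i \<inter> C \<noteq> {}"
  shows "\<exists>c. (\<forall>i<n. c i \<in> F i \<inter> C \<and> (\<forall>e \<in> F i \<inter> C. e = c i)) \<and> c ` {..<n} = C \<and> inj_on c {..<n}"
proof -
  define c where "c i = (SOME e. e \<in> F i \<inter> C)" for i
  have c1: "c i \<in> F i \<inter> C" if "i < n" for i
    unfolding c_def using ne that by (metis equals0I someI_ex)
  have inj: "inj_on c {..<n}"
  proof (rule inj_onI)
    fix i j assume ij: "i \<in> {..<n}" "j \<in> {..<n}" "c i = c j"
    show "i = j"
    proof (rule ccontr)
      assume "i \<noteq> j"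
      then have "F i \<inter> F j = {}" using D ij by auto
      moreover have "c i \<in> F i" "c j \<in> F j" using c1 ij(1,2) by auto
      ultimately show False using ij(3) by auto
    qed
  qed
  have sub: "c ` {..<n} \<subseteq> C" using c1 by auto
  have "card (c ` {..<n}) = n" using card_image[OF inj] by simp
  then have im: "c ` {..<n} = C" using card_subset_eq[OF fin sub] cn by simp
  have "\<forall>e \<in> F i \<inter> C. e = c i" if "i < n" for i
  proof
    fix e assume e: "e \<in> F i \<inter> C"
    then obtain j where j: "j < n" "e = c j" using im by force
    have "j = i"
    proof (rule ccontr)
      assume "j \<noteq> i"
      then have "F i \<inter> F j = {}" using D j that by auto
      moreover have "c j \<in> F j" using c1 j by auto
      ultimately show False using e j by auto
    qed
    then show "e = c i" using j by simp
  qed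
  then show ?thesis using c1 im inj by blast
qed

lemma conn_edge_set:
  assumes "e \<in> F" "(u = fst (en e) \<and> w = snd (en e)) \<or> (u = snd (en e) \<and> w = fst (en e))"
  shows "conn en F u w"
  using assms conn_edge1[of e F en] conn_edge2[of e F en]
  by (metis prod.collapse)

lemma crosses_compl: "crosses en (- T) e \<longleftrightarrow> crosses en T e"
  by (auto simp: crosses_def)

lemma menger_glue:
  fixes G :: "('v, 'e) mgraph"
  assumes mg: "multigraph G" and X: "X \<subseteq> verts G" "x \<in> X" "y \<in> verts G" "y \<notin> X"
    and n: "card (cut_edges G X) = n"
    and Fa: "\<forall>i<n. Fa i \<subseteq> edges (contr G (verts G - X) y) \<and> conn (ends (contr G (verts G - X) y)) (Fa i) x y"
    and D1: "\<forall>i<n. \<forall>j<n. i \<noteq> j \<longrightarrow> Fa i \<inter> Fa j = {}"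
    and Fb: "\<forall>i<n. Fb i \<subseteq> edges (contr G X x) \<and> conn (ends (contr G X x)) (Fb i) x y"
    and D2: "\<forall>i<n. \<forall>j<n. i \<noteq> j \<longrightarrow> Fb i \<inter> Fb j = {}"
  shows "\<exists>F. (\<forall>i<n. F i \<subseteq> edges G \<and> conn (ends G) (F i) x y) \<and> (\<forall>i<n. \<forall>j<n. i \<noteq> j \<longrightarrow> F i \<inter> F j = {})"
proof -
  define G1 where "G1 = contr G (verts G - X) y"
  define G2 where "G2 = contr G X x"
  define C where "C = cut_edges G X"
  have finC: "finite C" using mg_fin[OF mg] by (auto simp: C_def cut_edges_def)
  have cr1: "crosses (ends G1) X e \<longleftrightarrow> crosses (ends G) X e" for e
    unfolding G1_def using X by (intro crosses_contr) auto
  have cr2: "crosses (ends G2) X e \<longleftrightarrow> crosses (ends G) X e" for e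
    unfolding G2_def using X by (intro crosses_contr) auto
  have E1: "edges G1 \<subseteq> edges G" and E2: "edges G2 \<subseteq> edges G"
    by (auto simp: G1_def G2_def contr_simps)
  have E12: "edges G1 \<inter> edges G2 \<subseteq> C"
  proof
    fix e assume e: "e \<in> edges G1 \<inter> edges G2"
    then have eE: "e \<in> edges G" using E1 by auto
    note m = mg_ends[OF mg eE]
    show "e \<in> C" using e m by (auto simp: C_def cut_edges_def crosses_def G1_def G2_def contr_simps)
  qed
  have ne1: "\<forall>i<n. Fa i \<inter> C \<noteq> {}"
  proof (intro allI impI)
    fix i assume "i < n"
    then have "conn (ends G1) (Fa i) x y" "Fa i \<subseteq> edges G1" using Fa by (auto simp: G1_def)
    from conn_cut[OF this(1) X(2) X(4)] obtain e where "e \<in> Fa i" "crosses (ends G1) X e" by blast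
    then show "Fa i \<inter> C \<noteq> {}" using cr1 \<open>Fa i \<subseteq> edges G1\<close> E1 by (auto simp: C_def cut_edges_def)
  qed
  have ne2: "\<forall>i<n. Fb i \<inter> C \<noteq> {}"
  proof (intro allI impI)
    fix i assume "i < n"
    then have "conn (ends G2) (Fb i) x y" "Fb i \<subseteq> edges G2" using Fb by (auto simp: G2_def)
    from conn_cut[OF this(1) X(2) X(4)] obtain e where "e \<in> Fb i" "crosses (ends G2) X e" by blast
    then show "Fb i \<inter> C \<noteq> {}" using cr2 \<open>Fb i \<subseteq> edges G2\<close> E2 by (auto simp: C_def cut_edges_def)
  qed
  obtain c1 where c1: "\<forall>i<n. c1 i \<in> Fa i \<inter> C \<and> (\<forall>e \<in> Fa i \<inter> C. e = c1 i)"
    and im1: "c1 ` {..<n} = C" and inj1: "inj_on c1 {..<n}"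
    using pick_unique[OF finC _ D1 ne1] n by (auto simp: C_def)
  obtain c2 where c2: "\<forall>i<n. c2 i \<in> Fb i \<inter> C \<and> (\<forall>e \<in> Fb i \<inter> C. e = c2 i)"
    and im2: "c2 ` {..<n} = C" and inj2: "inj_on c2 {..<n}"
    using pick_unique[OF finC _ D2 ne2] n by (auto simp: C_def)
  define \<sigma> where "\<sigma> i = inv_into {..<n} c2 (c1 i)" for i
  have sig: "\<sigma> i < n \<and> c2 (\<sigma> i) = c1 i" if "i < n" for i
  proof -
    have "c1 i \<in> c2 ` {..<n}" using c1 that im2 by auto
    then have "inv_into {..<n} c2 (c1 i) \<in> {..<n}" "c2 (inv_into {..<n} c2 (c1 i)) = c1 i"
      by (rule inv_into_into, rule f_inv_into_f)
    then show ?thesis unfolding \<sigma>_def by simp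
  qed
  define H where "H i = Fa i \<union> Fb (\<sigma> i)" for i
  have Hsub: "H i \<subseteq> edges G" if "i < n" for i
    using Fa Fb E1 E2 sig[OF that] that unfolding H_def G1_def[symmetric] G2_def[symmetric] by blast
  have Hdisj: "H i \<inter> H j = {}" if ij: "i < n" "j < n" "i \<noteq> j" for i j
  proof -
    have sij: "\<sigma> i \<noteq> \<sigma> j" using sig ij inj1 by (metis inj_onD lessThan_iff)
    have a: "Fa i \<inter> Fa j = {}" using D1 ij by auto
    have b: "Fb (\<sigma> i) \<inter> Fb (\<sigma> j) = {}" using D2 sig ij sij by auto
    have c: "Fa i \<inter> Fb (\<sigma> j) = {}" if "i < n" "j < n" "i \<noteq> j" for i j
    proof (rule ccontr)
      assume "Fa i \<inter> Fb (\<sigma> j) \<noteq> {}"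
      then obtain e where e: "e \<in> Fa i" "e \<in> Fb (\<sigma> j)" by blast
      have "e \<in> edges G1" "e \<in> edges G2" using e Fa Fb sig that unfolding G1_def G2_def by blast+
      then have eC: "e \<in> C" using E12 by blast
      have "e = c1 i" using c1 e eC that by blast
      moreover have "e = c2 (\<sigma> j)" using c2 e eC sig that by blast
      ultimately have "c1 i = c1 j" using sig that by simp
      then show False using inj1 that by (metis inj_onD lessThan_iff)
    qed
    show ?thesis using a b c[OF ij] c[of j i] ij unfolding H_def by blast
  qed
  have Hconn: "conn (ends G) (H i) x y" if i: "i < n" for i
  proof -
    define c where "c = c1 i"
    define j where "j = \<sigma> i"
    have j: "j < n" "c2 j = c" using sig i by (auto simp: c_def j_def)
    have cC: "c \<in> C" and cF1: "c \<in> Fa i" using c1 i by (auto simp: c_def)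
    have cF2: "c \<in> Fb j" using c2 j by auto
    have cE: "c \<in> edges G" using cC by (auto simp: C_def cut_edges_def)
    define p where "p = fst (ends G c)"
    define q where "q = snd (ends G c)"
    have pq: "p \<in> X \<longleftrightarrow> q \<notin> X" using cC by (auto simp: C_def cut_edges_def crosses_def p_def q_def)
    have pqV: "p \<in> verts G" "q \<in> verts G" using mg_ends[OF mg cE] by (auto simp: p_def q_def)
    define u where "u = (if p \<in> X then p else q)"
    define w where "w = (if p \<in> X then q else p)"
    have uX: "u \<in> X" and wX: "w \<notin> X" using pq by (auto simp: u_def w_def)
    have c1conn: "conn (ends G1) (Fa i) x y" and F1s: "Fa i \<subseteq> edges G1" using Fa i by (auto simp: G1_def)
    have only1: "\<forall>e\<in>Fa i. crosses (ends G1) X e \<longrightarrow> e = c"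
    proof (intro ballI impI)
      fix e assume "e \<in> Fa i" "crosses (ends G1) X e"
      then have "e \<in> C" using cr1 F1s E1 by (auto simp: C_def cut_edges_def)
      then show "e = c" using c1 i \<open>e \<in> Fa i\<close> by (auto simp: c_def)
    qed
    have "crosses (ends G1) X c" using cr1 cC by (auto simp: C_def cut_edges_def)
    from conn_only_cross[OF c1conn X(2) X(4) only1 cF1 this]
    have s1: "conn (ends G1) (Fa i - {c}) x (if fst (ends G1 c) \<in> X then fst (ends G1 c) else snd (ends G1 c))" .
    have "(if fst (ends G1 c) \<in> X then fst (ends G1 c) else snd (ends G1 c)) = u"
      using pq X unfolding G1_def contr_simps u_def p_def q_def cm_def by auto
    with s1 have s1': "conn (ends G1) (Fa i - {c}) x u" by simp
    have same1: "ends G1 e = ends G e" if "e \<in> Fa i - {c}" for e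
    proof -
      have eE1: "e \<in> edges G1" using that F1s by auto
      have "\<not> crosses (ends G1) X e" using only1 that by auto
      then have "\<not> crosses (ends G) X e" using cr1 by simp
      moreover have "fst (ends G e) \<notin> verts G - X \<or> snd (ends G e) \<notin> verts G - X"
        using eE1 by (simp add: G1_def contr_simps)
      moreover note mg_ends[OF mg] E1 eE1
      ultimately have "fst (ends G e) \<in> X" "snd (ends G e) \<in> X" by (auto simp: crosses_def)
      then show ?thesis by (simp add: G1_def contr_simps cm_def)
    qed
    have x_u: "conn (ends G) (Fa i - {c}) x u" using s1' lk_cong[of "Fa i - {c}" "ends G1" "ends G"] same1 by simp
    have c2conn: "conn (ends G2) (Fb j) y x" and F2s: "Fb j \<subseteq> edges G2" using Fb j by (auto simp: G2_def intro: conn_sym)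
    have only2: "\<forall>e\<in>Fb j. crosses (ends G2) (- X) e \<longrightarrow> e = c"
    proof (intro ballI impI)
      fix e assume "e \<in> Fb j" "crosses (ends G2) (- X) e"
      then have "crosses (ends G) X e" using cr2 by (simp add: crosses_compl)
      then have "e \<in> C" using \<open>e \<in> Fb j\<close> F2s E2 by (auto simp: C_def cut_edges_def)
      then show "e = c" using c2 j \<open>e \<in> Fb j\<close> by auto
    qed
    have "crosses (ends G2) (- X) c" using cr2 cC by (auto simp: C_def cut_edges_def crosses_compl)
    from conn_only_cross[OF c2conn _ _ only2 cF2 this]
    have s2: "conn (ends G2) (Fb j - {c}) y (if fst (ends G2 c) \<in> - X then fst (ends G2 c) else snd (ends G2 c))"
      using X by auto
    have "(if fst (ends G2 c) \<in> - X then fst (ends G2 c) else snd (ends G2 c)) = w"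
      using pq X unfolding G2_def contr_simps w_def p_def q_def cm_def by auto
    with s2 have s2': "conn (ends G2) (Fb j - {c}) y w" by simp
    have same2: "ends G2 e = ends G e" if "e \<in> Fb j - {c}" for e
    proof -
      have eE2: "e \<in> edges G2" using that F2s by auto
      have "\<not> crosses (ends G2) (- X) e" using only2 that by auto
      then have "\<not> crosses (ends G) X e" using cr2 by (simp add: crosses_compl)
      moreover have "fst (ends G e) \<notin> X \<or> snd (ends G e) \<notin> X"
        using eE2 by (simp add: G2_def contr_simps)
      ultimately have "fst (ends G e) \<notin> X" "snd (ends G e) \<notin> X" by (auto simp: crosses_def)
      then show ?thesis by (simp add: G2_def contr_simps cm_def)
    qed
    have y_w: "conn (ends G) (Fb j - {c}) y w" using s2' lk_cong[of "Fb j - {c}" "ends G2" "ends G"] same2 by simp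
    have a1: "conn (ends G) (H i) x u" using conn_mono[OF _ x_u, of "H i"] by (auto simp: H_def)
    have a2: "conn (ends G) (H i) u w"
      by (rule conn_edge_set[of c]) (use cF1 in \<open>auto simp: H_def u_def w_def p_def q_def\<close>)
    have a3: "conn (ends G) (H i) w y" using conn_sym[OF conn_mono[OF _ y_w, of "H i"]] by (auto simp: H_def j_def)
    show ?thesis using a1 a2 a3 by (meson rtrancl_trans)
  qed
  show ?thesis
    by (rule exI[of _ H]) (use Hsub Hconn Hdisj in blast)
qed



definition good :: "('v, 'e) mgraph \<Rightarrow> nat \<Rightarrow> 'v \<Rightarrow> 'v \<Rightarrow> (nat \<Rightarrow> 'e set) \<Rightarrow> bool" where
  "good G n x y F \<longleftrightarrow> (\<forall>i<n. F i \<subseteq> edges G \<and> conn (ends G) (F i) x y) \<and>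
     (\<forall>i<n. \<forall>j<n. i \<noteq> j \<longrightarrow> F i \<inter> F j = {})"

lemma extend_sets:
  assumes g: "good (G\<lparr>edges := edges G - Ds\<rparr>) (n - 1) x y F'" and n: "n > 0"
    and Ds: "Ds \<subseteq> edges G" "conn (ends G) Ds x y"
  shows "\<exists>F. good G n x y F"
proof -
  define F where "F = F'(n - 1 := Ds)"
  have a: "\<forall>i<n. F i \<subseteq> edges G \<and> conn (ends G) (F i) x y"
  proof (intro allI impI)
    fix i assume i: "i < n"
    show "F i \<subseteq> edges G \<and> conn (ends G) (F i) x y"
    proof (cases "i = n - 1")
      case True then show ?thesis using Ds by (simp add: F_def)
    next
      case False
      then have "i < n - 1" using i by simp
      then show ?thesis using g False by (auto simp: good_def F_def)
    qed
  qed
  have b: "\<forall>i<n. \<forall>j<n. i \<noteq> j \<longrightarrow> F i \<inter> F j = {}"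
  proof (intro allI impI)
    fix i j assume ij: "i < n" "j < n" "i \<noteq> j"
    have sub: "F' l \<subseteq> edges G - Ds" if "l < n - 1" for l using g that by (auto simp: good_def)
    show "F i \<inter> F j = {}"
    proof (cases "i = n - 1")
      case True
      then have "j < n - 1" using ij by auto
      then show ?thesis using True sub[of j] ij by (auto simp: F_def)
    next
      case False
      then have i': "i < n - 1" using ij by auto
      show ?thesis
      proof (cases "j = n - 1")
        case True then show ?thesis using sub[OF i'] False by (auto simp: F_def)
      next
        case False
        then have "j < n - 1" using ij by auto
        then show ?thesis using g i' ij \<open>i \<noteq> n - 1\<close> False by (auto simp: good_def F_def)
      qed
    qed
  qed
  show ?thesis using a b by (auto simp: good_def)
qed

lemma cutsz_del:
  assumes "multigraph G"
  shows "cutsz (G\<lparr>edges := edges G - Ds\<rparr>) Z = cutsz G Z - card (cut_edges G Z \<inter> Ds)"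
proof -
  have "finite (cut_edges G Z)" using mg_fin[OF assms] by (auto simp: cut_edges_def)
  then show ?thesis unfolding cutsz_def cut_del by (simp add: card_Diff_subset_Int)
qed

lemma menger_sets:
  fixes G :: "('v, 'e) mgraph"
  assumes "multigraph G" "x \<in> verts G" "y \<in> verts G" "x \<noteq> y"
    "\<forall>X. x \<in> X \<longrightarrow> y \<notin> X \<longrightarrow> n \<le> cutsz G X"
  shows "\<exists>F. good G n x y F"
  using assms
proof (induction "card (verts G) + card (edges G)" arbitrary: G n x y rule: less_induct)
  case less
  note mg = less.prems(1) and xV = less.prems(2) and yV = less.prems(3) and xy = less.prems(4)
    and cut = less.prems(5)
  note IH = less.hyps
  have finV: "finite (verts G)" and finE: "finite (edges G)" using mg_fin[OF mg] by auto
  show ?case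
  proof (cases "n = 0")
    case True
    then show ?thesis by (auto simp: good_def)
  next
    case npos: False
    show ?thesis
    proof (cases "\<exists>X. X \<subseteq> verts G \<and> x \<in> X \<and> y \<notin> X \<and> cutsz G X = n \<and> (\<exists>u\<in>X. u \<noteq> x) \<and> (\<exists>w\<in>verts G - X. w \<noteq> y)")
      case True
      then obtain X u w where X: "X \<subseteq> verts G" "x \<in> X" "y \<notin> X" "cutsz G X = n"
        and u: "u \<in> X" "u \<noteq> x" and w: "w \<in> verts G - X" "w \<noteq> y" by blast
      define G1 where "G1 = contr G (verts G - X) y"
      define G2 where "G2 = contr G X x"
      have mg1: "multigraph G1" unfolding G1_def using contr_mg[OF mg] yV X by auto
      have mg2: "multigraph G2" unfolding G2_def using contr_mg[OF mg] X by auto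
      have V1: "verts G1 = X \<union> {y}" using X by (auto simp: G1_def contr_simps)
      have V2: "verts G2 = (verts G - X) \<union> {x}" by (auto simp: G2_def contr_simps)
      have cV1: "card (verts G1) < card (verts G)"
        using V1 X w yV finV by (intro psubset_card_mono) auto
      have cV2: "card (verts G2) < card (verts G)"
        using V2 X u xV finV by (intro psubset_card_mono) auto
      have cE1: "card (edges G1) \<le> card (edges G)"
        using finE by (intro card_mono) (auto simp: G1_def contr_simps)
      have cE2: "card (edges G2) \<le> card (edges G)"
        using finE by (intro card_mono) (auto simp: G2_def contr_simps)
      have cut1: "\<forall>Z. x \<in> Z \<longrightarrow> y \<notin> Z \<longrightarrow> n \<le> cutsz G1 Z"
      proof (intro allI impI)
        fix Z assume Z: "x \<in> Z" "y \<notin> Z"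
        have "cut_edges G1 Z = cut_edges G1 (Z \<inter> verts G1)" by (rule cut_restrict[OF mg1])
        also have "\<dots> = cut_edges G ((Z \<inter> verts G1 - {y}) \<union> (if y \<in> Z \<inter> verts G1 then verts G - X else {}))"
          unfolding G1_def using mg yV X by (intro contr_cut) (auto simp: G1_def)
        finally have "cutsz G1 Z = cutsz G (Z \<inter> verts G1 - {y})" using Z by (simp add: cutsz_def)
        moreover have "n \<le> cutsz G (Z \<inter> verts G1 - {y})" using cut Z V1 X by auto
        ultimately show "n \<le> cutsz G1 Z" by simp
      qed
      have cut2: "\<forall>Z. x \<in> Z \<longrightarrow> y \<notin> Z \<longrightarrow> n \<le> cutsz G2 Z"
      proof (intro allI impI)
        fix Z assume Z: "x \<in> Z" "y \<notin> Z"
        have "cut_edges G2 Z = cut_edges G2 (Z \<inter> verts G2)" by (rule cut_restrict[OF mg2])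
        also have "\<dots> = cut_edges G ((Z \<inter> verts G2 - {x}) \<union> (if x \<in> Z \<inter> verts G2 then X else {}))"
          unfolding G2_def using mg X by (intro contr_cut) (auto simp: G2_def)
        finally have "cutsz G2 Z = cutsz G ((Z \<inter> verts G2 - {x}) \<union> X)" using Z V2 by (simp add: cutsz_def)
        moreover have "n \<le> cutsz G ((Z \<inter> verts G2 - {x}) \<union> X)" using cut Z X by auto
        ultimately show "n \<le> cutsz G2 Z" by simp
      qed
      have "\<exists>F. good G1 n x y F"
        by (rule IH) (use cV1 cE1 mg1 cut1 V1 X xy in auto)
      then obtain F1 where F1: "good G1 n x y F1" by blast
      have "\<exists>F. good G2 n x y F"
        by (rule IH) (use cV2 cE2 mg2 cut2 V2 X xy yV in auto)
      then obtain F2 where F2: "good G2 n x y F2" by blast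
      have "\<exists>F. (\<forall>i<n. F i \<subseteq> edges G \<and> conn (ends G) (F i) x y) \<and> (\<forall>i<n. \<forall>j<n. i \<noteq> j \<longrightarrow> F i \<inter> F j = {})"
        by (rule menger_glue[where Fa=F1 and Fb=F2, OF mg X(1,2) yV X(3)]) (use X(4) F1 F2 in \<open>auto simp: cutsz_def good_def G1_def G2_def\<close>)
      then show ?thesis unfolding good_def by blast
    next
      case noT: False
      show ?thesis
      proof (cases "\<exists>e\<in>edges G. fst (ends G e) \<notin> {x, y} \<and> snd (ends G e) \<notin> {x, y}")
        case True
        then obtain e where e: "e \<in> edges G" "fst (ends G e) \<notin> {x, y}" "snd (ends G e) \<notin> {x, y}" by blast
        define G' where "G' = G\<lparr>edges := edges G - {e}\<rparr>"
        have mg': "multigraph G'" unfolding G'_def by (rule del_mg[OF mg])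
        have cE: "card (edges G') < card (edges G)" unfolding G'_def using card_Diff1_less[OF finE e(1)] by simp
        have cut': "\<forall>Z. x \<in> Z \<longrightarrow> y \<notin> Z \<longrightarrow> n \<le> cutsz G' Z"
        proof (intro allI impI)
          fix Z assume Z: "x \<in> Z" "y \<notin> Z"
          have eq: "cutsz G' Z = cutsz G Z - card (cut_edges G Z \<inter> {e})"
            unfolding G'_def by (rule cutsz_del[OF mg])
          show "n \<le> cutsz G' Z"
          proof (cases "e \<in> cut_edges G Z")
            case False
            then show ?thesis using eq cut Z by auto
          next
            case True
            define Z0 where "Z0 = Z \<inter> verts G"
            have cz: "cut_edges G Z = cut_edges G Z0" unfolding Z0_def by (rule cut_restrict[OF mg])
            have "cutsz G Z0 \<noteq> n"
            proof
              assume h: "cutsz G Z0 = n"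
              note m = mg_ends[OF mg e(1)]
              have "e \<in> cut_edges G Z0" using True cz by simp
              then have cr: "crosses (ends G) Z0 e" by (simp add: cut_edges_def)
              have "\<exists>u\<in>Z0. u \<noteq> x" and "\<exists>w\<in>verts G - Z0. w \<noteq> y"
                using cr m e by (auto simp: crosses_def Z0_def)
              then show False using noT h Z xV by (auto simp: Z0_def)
            qed
            moreover have "n \<le> cutsz G Z0" using cut Z xV by (auto simp: Z0_def)
            ultimately have "n < cutsz G Z" using cz by (simp add: cutsz_def)
            then show ?thesis using eq True by simp
          qed
        qed
        have "\<exists>F. good G' n x y F"
          by (rule IH) (use cE mg' cut' xV yV xy in \<open>auto simp: G'_def\<close>)
        then obtain F where "good G' n x y F" by blast
        then have "good G n x y F" by (auto simp: good_def G'_def)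
        then show ?thesis by blast
      next
        case noD: False
        have n1: "n - 1 < n" using npos by simp
        show ?thesis
        proof (cases "\<exists>e\<in>edges G. ends G e = (x, y) \<or> ends G e = (y, x)")
          case True
          then obtain e where e: "e \<in> edges G" "ends G e = (x, y) \<or> ends G e = (y, x)" by blast
          define G' where "G' = G\<lparr>edges := edges G - {e}\<rparr>"
          have mg': "multigraph G'" unfolding G'_def by (rule del_mg[OF mg])
          have cE: "card (edges G') < card (edges G)" unfolding G'_def using card_Diff1_less[OF finE e(1)] by simp
          have cut': "\<forall>Z. x \<in> Z \<longrightarrow> y \<notin> Z \<longrightarrow> n - 1 \<le> cutsz G' Z"
          proof (intro allI impI)
            fix Z assume Z: "x \<in> Z" "y \<notin> Z"
            have eq: "cutsz G' Z = cutsz G Z - card (cut_edges G Z \<inter> {e})"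
              unfolding G'_def by (rule cutsz_del[OF mg])
            have "card (cut_edges G Z \<inter> {e}) \<le> 1" by (simp add: card_le_Suc0_iff_eq)
            then show "n - 1 \<le> cutsz G' Z" using eq cut Z by fastforce
          qed
          have "\<exists>F. good G' (n - 1) x y F"
            by (rule IH) (use cE mg' cut' xV yV xy in \<open>auto simp: G'_def\<close>)
          then obtain F where F: "good G' (n - 1) x y F" by blast
          have "conn (ends G) {e} x y" using e(2) conn_edge_set[of e "{e}" x "ends G" y] by auto
          then show ?thesis using extend_sets[of G "{e}" n x y F] F npos e(1) by (auto simp: G'_def)
        next
          case noX: False
          show ?thesis
          proof (cases "\<exists>v e1 e2. e1 \<in> edges G \<and> e2 \<in> edges G \<and> (ends G e1 = (x, v) \<or> ends G e1 = (v, x))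
                          \<and> (ends G e2 = (v, y) \<or> ends G e2 = (y, v))")
            case True
            then obtain v e1 e2 where e: "e1 \<in> edges G" "e2 \<in> edges G"
              "ends G e1 = (x, v) \<or> ends G e1 = (v, x)" "ends G e2 = (v, y) \<or> ends G e2 = (y, v)" by blast
            have ne: "e1 \<noteq> e2" using e xy by auto
            define G' where "G' = G\<lparr>edges := edges G - {e1, e2}\<rparr>"
            have mg': "multigraph G'" unfolding G'_def by (rule del_mg[OF mg])
            have cE: "card (edges G') < card (edges G)" unfolding G'_def
              using e finE by (intro psubset_card_mono) auto
            have cut': "\<forall>Z. x \<in> Z \<longrightarrow> y \<notin> Z \<longrightarrow> n - 1 \<le> cutsz G' Z"
            proof (intro allI impI)
              fix Z assume Z: "x \<in> Z" "y \<notin> Z"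
              have eq: "cutsz G' Z = cutsz G Z - card (cut_edges G Z \<inter> {e1, e2})"
                unfolding G'_def by (rule cutsz_del[OF mg])
              have "cut_edges G Z \<inter> {e1, e2} = (if v \<in> Z then {e2} else {e1})"
                using e Z ne by (auto simp: cut_edges_def crosses_def)
              then have "card (cut_edges G Z \<inter> {e1, e2}) \<le> 1" by simp
              then show "n - 1 \<le> cutsz G' Z" using eq cut Z by fastforce
            qed
            have "\<exists>F. good G' (n - 1) x y F"
              by (rule IH) (use cE mg' cut' xV yV xy in \<open>auto simp: G'_def\<close>)
            then obtain F where F: "good G' (n - 1) x y F" by blast
            have "conn (ends G) {e1, e2} x v" using e(3) conn_edge_set[of e1 "{e1, e2}" x "ends G" v] by auto
            moreover have "conn (ends G) {e1, e2} v y" using e(4) conn_edge_set[of e2 "{e1, e2}" v "ends G" y] by auto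
            ultimately have "conn (ends G) {e1, e2} x y" by (rule rtrancl_trans)
            then show ?thesis using extend_sets[of G "{e1, e2}" n x y F] F npos e(1,2) by (auto simp: G'_def)
          next
            case noP: False
            define X0 where "X0 = {x} \<union> {v. \<exists>e\<in>edges G. ends G e = (x, v) \<or> ends G e = (v, x)}"
            have "0 < cutsz G X0" using cut npos xy noX by (auto simp: X0_def)
            then obtain e where e: "e \<in> cut_edges G X0"
              by (metis card.empty cutsz_def equals0I less_irrefl)
            then have eE: "e \<in> edges G" and cr: "crosses (ends G) X0 e" by (auto simp: cut_edges_def)
            obtain a b where ab: "ends G e = (a, b)" by force
            have inc: "a \<in> {x, y} \<or> b \<in> {x, y}" using noD eE ab by force
            have "False"
            proof -
              consider "a = x" | "b = x" | "a = y" "b \<noteq> x" | "b = y" "a \<noteq> x" using inc by blast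
              then show False
              proof cases
                case 1 then show False using cr ab eE by (auto simp: crosses_def X0_def)
              next
                case 2 then show False using cr ab eE by (auto simp: crosses_def X0_def)
              next
                case 3
                have "y \<notin> X0" using noX xy by (auto simp: X0_def)
                then have "b \<in> X0" using cr ab 3 by (auto simp: crosses_def)
                then obtain e1 where "e1 \<in> edges G" "ends G e1 = (x, b) \<or> ends G e1 = (b, x)"
                  using 3 by (auto simp: X0_def)
                then show False using noP eE ab 3 by blast
              next
                case 4
                have "y \<notin> X0" using noX xy by (auto simp: X0_def)
                then have "a \<in> X0" using cr ab 4 by (auto simp: crosses_def)
                then obtain e1 where "e1 \<in> edges G" "ends G e1 = (x, a) \<or> ends G e1 = (a, x)"
                  using 4 by (auto simp: X0_def)
                then show False using noP eE ab 4 by blast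
              qed
            qed
            then show ?thesis ..
          qed
        qed
      qed
    qed
  qed
qed



lemma lam_ge_iff_cut:
  assumes mg: "multigraph G" and xV: "x \<in> verts G" and yV: "y \<in> verts G" and xy: "x \<noteq> y"
  shows "n \<le> lam G x y \<longleftrightarrow> (\<forall>X. x \<in> X \<longrightarrow> y \<notin> X \<longrightarrow> n \<le> cutsz G X)"
proof
  assume "n \<le> lam G x y"
  then show "\<forall>X. x \<in> X \<longrightarrow> y \<notin> X \<longrightarrow> n \<le> cutsz G X" using lam_le_cut[OF mg xy] by blast
next
  assume "\<forall>X. x \<in> X \<longrightarrow> y \<notin> X \<longrightarrow> n \<le> cutsz G X"
  then obtain F where F: "good G n x y F" using menger_sets[OF mg xV yV xy] by blast
  have ex: "\<exists>p. is_path G x y p \<and> set (snd p) \<subseteq> F i" if "i < n" for i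
  proof -
    have "F i \<subseteq> edges G" "conn (ends G) (F i) x y" using F that by (auto simp: good_def)
    from conn_path[OF mg this(1) xV this(2)] show ?thesis by auto
  qed
  define P where "P i = (SOME p. is_path G x y p \<and> set (snd p) \<subseteq> F i)" for i
  have P: "is_path G x y (P i) \<and> set (snd (P i)) \<subseteq> F i" if "i < n" for i
    unfolding P_def by (rule someI_ex[OF ex[OF that]])
  define ps where "ps = map P [0..<n]"
  have "edge_disjoint_paths G x y n" unfolding edge_disjoint_paths_def
  proof (rule exI[of _ ps], intro conjI)
    show "length ps = n" by (simp add: ps_def)
    show "\<forall>p\<in>set ps. is_path G x y p" using P by (auto simp: ps_def)
    show "\<forall>i<n. \<forall>j<n. i \<noteq> j \<longrightarrow> set (snd (ps ! i)) \<inter> set (snd (ps ! j)) = {}"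
    proof (intro allI impI)
      fix i j assume ij: "i < n" "j < n" "i \<noteq> j"
      have "F i \<inter> F j = {}" using F ij by (auto simp: good_def)
      then show "set (snd (ps ! i)) \<inter> set (snd (ps ! j)) = {}"
        using P[OF ij(1)] P[OF ij(2)] ij by (auto simp: ps_def)
    qed
  qed
  then show "n \<le> lam G x y" using lam_ge_iff_edp[OF mg xy] by blast
qed



definition sep :: "'v set \<Rightarrow> 'v set \<Rightarrow> 'v set \<Rightarrow> bool" where
  "sep Vp A X \<longleftrightarrow> X \<subseteq> Vp \<and> X \<inter> A \<noteq> {} \<and> \<not> A \<subseteq> X"

definition dang :: "'v set \<Rightarrow> 'v set \<Rightarrow> nat \<Rightarrow> ('v set \<Rightarrow> nat) \<Rightarrow> 'v set \<Rightarrow> bool" where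
  "dang Vp A k d X \<longleftrightarrow> sep Vp A X \<and> d X \<le> 2 * k + 1"

definition NN :: "'v set \<Rightarrow> 'v set \<Rightarrow> nat \<Rightarrow> ('v set \<Rightarrow> nat) \<Rightarrow> ('e \<Rightarrow> 'v) \<Rightarrow> 'e \<Rightarrow> 'e \<Rightarrow> bool" where
  "NN Vp A k d a h h' \<longleftrightarrow> (\<exists>X. dang Vp A k d X \<and> a h \<in> X \<and> a h' \<in> X)"

lemma sepI: "X \<subseteq> Vp \<Longrightarrow> u \<in> X \<Longrightarrow> u \<in> A \<Longrightarrow> v \<in> A \<Longrightarrow> v \<notin> X \<Longrightarrow> sep Vp A X"
  by (auto simp: sep_def)

lemma core:
  fixes Vp A :: "'v set" and k :: nat and d :: "'v set \<Rightarrow> nat" and I :: "'e set" and a :: "'e \<Rightarrow> 'v"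
  assumes finI: "finite I"
    and aA: "\<forall>h\<in>I. a h \<in> A" and AV: "A \<subseteq> Vp"
    and H: "\<forall>X. sep Vp A X \<longrightarrow> 2 * k \<le> d X"
    and Id1: "\<forall>X Y. X \<subseteq> Vp \<longrightarrow> Y \<subseteq> Vp \<longrightarrow> d (X \<inter> Y) + d (X \<union> Y) \<le> d X + d Y"
    and Id2: "\<forall>X Y. X \<subseteq> Vp \<longrightarrow> Y \<subseteq> Vp \<longrightarrow> d (X - Y) + d (Y - X) + 2 * card {h\<in>I. a h \<in> X \<inter> Y} \<le> d X + d Y"
    and Comp: "\<forall>X. X \<subseteq> Vp \<longrightarrow> d (Vp - X) + 2 * card {h\<in>I. a h \<in> X} = d X + card I"
    and Par: "\<forall>X Y. X \<subseteq> Vp \<longrightarrow> Y \<subseteq> Vp \<longrightarrow> X \<inter> Y = {} \<longrightarrow> even (d X + d Y + d (X \<union> Y))"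
  defines "adj \<equiv> \<lambda>h h'. h \<noteq> h' \<and> \<not> NN Vp A k d a h h'"
  shows "complete_multipartite I adj \<or> (isolated_plus_balanced_bipartite I adj \<and> odd (card I))"
proof (cases "\<forall>e\<in>I. \<forall>f\<in>I. \<forall>g\<in>I. e \<noteq> g \<longrightarrow> NN Vp A k d a e f \<longrightarrow> NN Vp A k d a f g \<longrightarrow> NN Vp A k d a e g")
  case tr: True
  have sym: "NN Vp A k d a h h' \<Longrightarrow> NN Vp A k d a h' h" for h h' by (auto simp: NN_def)
  define R where "R h h' \<longleftrightarrow> h' = h \<or> NN Vp A k d a h h'" for h h'
  have Rs: "R h h' \<Longrightarrow> R h' h" for h h' using sym by (auto simp: R_def)
  have Rt: "R h h' \<Longrightarrow> R h' h'' \<Longrightarrow> h \<in> I \<Longrightarrow> h' \<in> I \<Longrightarrow> h'' \<in> I \<Longrightarrow> R h h''" for h h' h''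
  proof -
    assume a1: "R h h'" and a2: "R h' h''" and i: "h \<in> I" "h' \<in> I" "h'' \<in> I"
    show "R h h''"
    proof (cases "h = h''")
      case True then show ?thesis by (simp add: R_def)
    next
      case ne: False
      show ?thesis
      proof (cases "h' = h")
        case True then show ?thesis using a2 by (simp add: R_def)
      next
        case False
        then have n1: "NN Vp A k d a h h'" using a1 by (simp add: R_def)
        show ?thesis
        proof (cases "h'' = h'")
          case True then show ?thesis using a1 by simp
        next
          case False
          then have "NN Vp A k d a h' h''" using a2 by (simp add: R_def)
          then show ?thesis using tr i ne n1 by (simp add: R_def)
        qed
      qed
    qed
  qed
  define P where "P = (\<lambda>h. {h' \<in> I. R h h'}) ` I"
  show ?thesis
  proof (rule disjI1)
    show "complete_multipartite I adj" unfolding complete_multipartite_def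
    proof (rule exI[of _ P], intro conjI)
      show "\<Union>P = I" by (auto simp: P_def R_def)
      show "{} \<notin> P" by (auto simp: P_def R_def)
      show "\<forall>X\<in>P. \<forall>Y\<in>P. X \<noteq> Y \<longrightarrow> X \<inter> Y = {}"
      proof (intro ballI impI)
        fix X Y assume XY: "X \<in> P" "Y \<in> P" "X \<noteq> Y"
        then obtain h1 h2 where h: "h1 \<in> I" "h2 \<in> I" "X = {h' \<in> I. R h1 h'}" "Y = {h' \<in> I. R h2 h'}"
          by (auto simp: P_def)
        show "X \<inter> Y = {}"
        proof (rule ccontr)
          assume "X \<inter> Y \<noteq> {}"
          then obtain z where z: "z \<in> I" "R h1 z" "R h2 z" using h by auto
          have "R h1 h2" using Rt[OF z(2) Rs[OF z(3)]] h z by auto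
          then have "X = Y" using h Rt Rs by blast
          then show False using XY by simp
        qed
      qed
      show "\<forall>u\<in>I. \<forall>v\<in>I. adj u v \<longleftrightarrow> (\<forall>X\<in>P. \<not> (u \<in> X \<and> v \<in> X))"
      proof (intro ballI)
        fix u v assume uv: "u \<in> I" "v \<in> I"
        have "(\<exists>X\<in>P. u \<in> X \<and> v \<in> X) \<longleftrightarrow> R u v"
        proof
          assume "\<exists>X\<in>P. u \<in> X \<and> v \<in> X"
          then obtain h where "h \<in> I" "R h u" "R h v" by (auto simp: P_def)
          then show "R u v" using Rt Rs uv by blast
        next
          assume "R u v"
          then have "u \<in> {h' \<in> I. R u h'} \<and> v \<in> {h' \<in> I. R u h'}" using uv by (auto simp: R_def)
          then show "\<exists>X\<in>P. u \<in> X \<and> v \<in> X" using uv by (auto simp: P_def)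
        qed
        moreover have "adj u v \<longleftrightarrow> \<not> R u v" by (auto simp: adj_def R_def)
        ultimately show "adj u v \<longleftrightarrow> (\<forall>X\<in>P. \<not> (u \<in> X \<and> v \<in> X))" by blast
      qed
    qed
  qed
next
  case False
  then obtain e f g where efg: "e \<in> I" "f \<in> I" "g \<in> I" "e \<noteq> g"
    and Nef: "NN Vp A k d a e f" and Nfg: "NN Vp A k d a f g" and nNeg: "\<not> NN Vp A k d a e g" by blast
  have fe: "f \<noteq> e" using Nfg nNeg by auto
  have fg: "f \<noteq> g" using Nef nNeg by auto
  obtain X where X: "sep Vp A X" "d X \<le> 2 * k + 1" "a e \<in> X" "a f \<in> X"
    using Nef by (auto simp: NN_def dang_def)
  obtain Y where Y: "sep Vp A Y" "d Y \<le> 2 * k + 1" "a f \<in> Y" "a g \<in> Y"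
    using Nfg by (auto simp: NN_def dang_def)
  have XV: "X \<subseteq> Vp" and YV: "Y \<subseteq> Vp" using X Y by (auto simp: sep_def)
  have ae: "a e \<in> A" and af: "a f \<in> A" and ag: "a g \<in> A" using aA efg by auto
  have NI: "NN Vp A k d a h h'" if "sep Vp A Z" "d Z \<le> 2 * k + 1" "a h \<in> Z" "a h' \<in> Z" for Z h h'
    using that by (auto simp: NN_def dang_def)
  have agX: "a g \<notin> X" using NI[OF X(1,2,3)] nNeg by auto
  have aeY: "a e \<notin> Y" using NI[OF Y(1,2) _ Y(4), of e] nNeg by auto
  have sepP: "sep Vp A (X - Y)" using XV X aeY ae af Y by (intro sepI[of _ _ "a e" _ "a f"]) auto
  have sepQ: "sep Vp A (Y - X)" using YV Y agX ag af X by (intro sepI[of _ _ "a g" _ "a f"]) auto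
  have dP: "2 * k \<le> d (X - Y)" and dQ: "2 * k \<le> d (Y - X)" using H sepP sepQ by auto
  define IC where "IC = {h\<in>I. a h \<in> X \<inter> Y}"
  have fIC: "f \<in> IC" using efg X Y by (auto simp: IC_def)
  have finIC: "finite IC" using finI by (auto simp: IC_def)
  have "d (X - Y) + d (Y - X) + 2 * card IC \<le> d X + d Y" using Id2 XV YV by (auto simp: IC_def)
  then have cIC: "card IC \<le> 1" using dP dQ X(2) Y(2) by linarith
  have IC: "IC = {f}"
  proof -
    have "card IC \<ge> 1" using fIC finIC by (metis One_nat_def Suc_leI card_gt_0_iff empty_iff)
    then have "card IC = 1" using cIC by simp
    then show ?thesis using fIC by (metis card_1_singletonE singletonD)
  qed
  have dP2: "d (X - Y) = 2 * k" and dQ2: "d (Y - X) = 2 * k"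
    using \<open>d (X - Y) + d (Y - X) + 2 * card IC \<le> d X + d Y\<close> dP dQ X(2) Y(2) IC
    by simp_all
  have AXY: "A \<subseteq> X \<union> Y"
  proof (rule ccontr)
    assume "\<not> A \<subseteq> X \<union> Y"
    then obtain z where z: "z \<in> A" "z \<notin> X \<union> Y" by blast
    have sU: "sep Vp A (X \<union> Y)" using XV YV X ae z by (intro sepI[of _ _ "a e" _ z]) auto
    have dU: "\<not> d (X \<union> Y) \<le> 2 * k + 1" using NI[OF sU, of e g] X Y nNeg by auto
    have sC: "sep Vp A (X \<inter> Y)" using XV X Y af ae aeY by (intro sepI[of _ _ "a f" _ "a e"]) auto
    have dC: "2 * k \<le> d (X \<inter> Y)" using H sC by auto
    have "d (X \<inter> Y) + d (X \<union> Y) \<le> d X + d Y" using Id1 XV YV by auto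
    then have e1: "d X = 2 * k + 1" and e2: "d (X \<inter> Y) = 2 * k" using dU dC X(2) Y(2) by linarith+
    have "even (d (X - Y) + d (X \<inter> Y) + d ((X - Y) \<union> (X \<inter> Y)))"
    proof -
      have "X - Y \<subseteq> Vp" "X \<inter> Y \<subseteq> Vp" "(X - Y) \<inter> (X \<inter> Y) = {}" using XV by auto
      then show ?thesis using Par by blast
    qed
    moreover have "(X - Y) \<union> (X \<inter> Y) = X" by auto
    ultimately show False using e1 e2 dP2 by simp
  qed
  define IP where "IP = {h\<in>I. a h \<in> X - Y}"
  define IQ where "IQ = {h\<in>I. a h \<in> Y - X}"
  have Ipart: "I = IP \<union> IQ \<union> {f}"
  proof
    show "I \<subseteq> IP \<union> IQ \<union> {f}"
    proof
      fix h assume h: "h \<in> I"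
      then have "a h \<in> X \<union> Y" using aA AXY by auto
      then show "h \<in> IP \<union> IQ \<union> {f}" using IC h unfolding IP_def IQ_def IC_def by blast
    qed
    show "IP \<union> IQ \<union> {f} \<subseteq> I" using efg by (auto simp: IP_def IQ_def)
  qed
  have disj: "IP \<inter> IQ = {}" "f \<notin> IP" "f \<notin> IQ" using X Y by (auto simp: IP_def IQ_def)
  have finP: "finite IP" and finQ: "finite IQ" using finI by (auto simp: IP_def IQ_def)
  have cardI: "card I = card IP + card IQ + 1"
    using Ipart disj finP finQ by (simp add: card_Un_disjoint)
  have XI: "{h\<in>I. a h \<in> X} = IP \<union> {f}" using Ipart X disj by (auto simp: IP_def IQ_def)
  have YI: "{h\<in>I. a h \<in> Y} = IQ \<union> {f}" using Ipart Y disj by (auto simp: IP_def IQ_def)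
  have cX: "card {h\<in>I. a h \<in> X} = card IP + 1" using XI disj finP by simp
  have cY: "card {h\<in>I. a h \<in> Y} = card IQ + 1" using YI disj finQ by simp
  have sWX: "sep Vp A (Vp - X)" using AV ag agX ae X by (intro sepI[of _ _ "a g" _ "a e"]) auto
  have sWY: "sep Vp A (Vp - Y)" using AV ae aeY ag Y by (intro sepI[of _ _ "a e" _ "a g"]) auto
  have compX: "d (Vp - X) + 2 * (card IP + 1) = d X + card I" using Comp XV cX by metis
  have compY: "d (Vp - Y) + 2 * (card IQ + 1) = d Y + card I" using Comp YV cY by metis
  have hWX: "2 * k \<le> d (Vp - X)" and hWY: "2 * k \<le> d (Vp - Y)" using H sWX sWY by auto
  have pq: "card IP = card IQ" using compX compY hWX hWY cardI X(2) Y(2) by (simp add: algebra_simps; linarith)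
  have oddI: "odd (card I)" using cardI pq by simp
  have dWX: "d (Vp - X) \<le> 2 * k"
    using compX cardI pq X(2) by (simp add: algebra_simps; linarith)
  have dWY: "d (Vp - Y) \<le> 2 * k"
    using compY cardI pq Y(2) by (simp add: algebra_simps; linarith)
  have cross: "\<not> NN Vp A k d a h h'" if hP: "h \<in> IP" and hQ: "h' \<in> IQ" for h h'
  proof
    assume "NN Vp A k d a h h'"
    then obtain Z where Z: "sep Vp A Z" "d Z \<le> 2 * k + 1" "a h \<in> Z" "a h' \<in> Z"
      by (auto simp: NN_def dang_def)
    have ZV: "Z \<subseteq> Vp" using Z by (auto simp: sep_def)
    have ahP: "a h \<in> X" "a h \<notin> Y" "a h \<in> A" using hP aA by (auto simp: IP_def)
    have ahQ: "a h' \<in> Y" "a h' \<notin> X" "a h' \<in> A" using hQ aA by (auto simp: IQ_def)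
    have hI: "h \<in> I" "h' \<in> I" using hP hQ by (auto simp: IP_def IQ_def)
    show False
    proof (cases "a f \<in> Z")
      case False
      define W where "W = Vp - X"
      have s1: "sep Vp A (Z \<inter> W)" using ZV Z ahQ ahP AV unfolding W_def
        by (intro sepI[of _ _ "a h'" _ "a h"]) auto
      have "d (Z \<inter> W) + d (Z \<union> W) \<le> d Z + d W" using Id1 ZV by (auto simp: W_def)
      then have d1: "d (Z \<union> W) \<le> 2 * k + 1" using H s1 Z(2) dWX unfolding W_def by fastforce
      define Z1 where "Z1 = Z \<union> W"
      have Z1V: "Z1 \<subseteq> Vp" using ZV by (auto simp: Z1_def W_def)
      have agZ1: "a g \<in> Z1" and afZ1: "a f \<notin> Z1" and ahZ1: "a h \<in> Z1"
        using ag agX AV False X Z by (auto simp: Z1_def W_def)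
      define W' where "W' = Vp - Y"
      have s2: "sep Vp A (Z1 \<inter> W')" using Z1V ahZ1 ahP AV agZ1 ag Y unfolding W'_def
        by (intro sepI[of _ _ "a h" _ "a g"]) auto
      have "d (Z1 \<inter> W') + d (Z1 \<union> W') \<le> d Z1 + d W'" using Id1 Z1V by (auto simp: W'_def)
      then have d2: "d (Z1 \<union> W') \<le> 2 * k + 1" using H s2 d1 dWY unfolding W'_def Z1_def by fastforce
      have s3: "sep Vp A (Z1 \<union> W')" using Z1V ae aeY AV afZ1 af Y unfolding W'_def
        by (intro sepI[of _ _ "a e" _ "a f"]) auto
      have "a e \<in> Z1 \<union> W'" "a g \<in> Z1 \<union> W'" using ae aeY AV agZ1 by (auto simp: W'_def)
      then show False using NI[OF s3 d2] nNeg by auto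
    next
      case afZ: True
      show False
      proof (cases "a g \<in> Z")
        case False
        have s1: "sep Vp A (Z - Y)" using ZV Z ahP af Y by (intro sepI[of _ _ "a h" _ "a f"]) auto
        have s2: "sep Vp A (Y - Z)" using YV Y False ag ahQ Z by (intro sepI[of _ _ "a g" _ "a h'"]) auto
        have "{f, h'} \<subseteq> {h''\<in>I. a h'' \<in> Z \<inter> Y}" using afZ Y efg hI Z ahQ by auto
        moreover have "f \<noteq> h'" using hQ disj by auto
        then have "card {f, h'} = 2" by simp
        moreover have "finite {h''\<in>I. a h'' \<in> Z \<inter> Y}" using finI by auto
        ultimately have "2 \<le> card {h''\<in>I. a h'' \<in> Z \<inter> Y}" by (metis card_mono)
        moreover have "d (Z - Y) + d (Y - Z) + 2 * card {h''\<in>I. a h'' \<in> Z \<inter> Y} \<le> d Z + d Y"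
          using Id2 ZV YV by blast
        moreover have "2 * k \<le> d (Z - Y)" "2 * k \<le> d (Y - Z)" using H s1 s2 by auto
        ultimately show False using Z(2) Y(2) by linarith
      next
        case agZ: True
        show False
        proof (cases "a e \<in> Z")
          case True
          then show False using NI[OF Z(1,2) True agZ] nNeg by simp
        next
          case False
          have s1: "sep Vp A (Z - X)" using ZV Z ahQ af X by (intro sepI[of _ _ "a h'" _ "a f"]) auto
          have s2: "sep Vp A (X - Z)" using XV X False ae ahP Z by (intro sepI[of _ _ "a e" _ "a h"]) auto
          have "{f, h} \<subseteq> {h''\<in>I. a h'' \<in> Z \<inter> X}" using afZ X efg hI Z ahP by auto
          moreover have "f \<noteq> h" using hP disj by auto
          then have "card {f, h} = 2" by simp
          moreover have "finite {h''\<in>I. a h'' \<in> Z \<inter> X}" using finI by auto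
          ultimately have "2 \<le> card {h''\<in>I. a h'' \<in> Z \<inter> X}" by (metis card_mono)
          moreover have "d (Z - X) + d (X - Z) + 2 * card {h''\<in>I. a h'' \<in> Z \<inter> X} \<le> d Z + d X"
            using Id2 ZV XV by blast
          moreover have "2 * k \<le> d (Z - X)" "2 * k \<le> d (X - Z)" using H s1 s2 by auto
          ultimately show False using Z(2) X(2) by linarith
        qed
      qed
    qed
  qed
  have NX: "NN Vp A k d a h h'" if "a h \<in> X" "a h' \<in> X" for h h' using NI[OF X(1,2) that] .
  have NY: "NN Vp A k d a h h'" if "a h \<in> Y" "a h' \<in> Y" for h h' using NI[OF Y(1,2) that] .
  have "isolated_plus_balanced_bipartite I adj"
    unfolding isolated_plus_balanced_bipartite_def
  proof (rule exI[of _ f], rule exI[of _ IP], rule exI[of _ IQ], intro conjI)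
    show "f \<in> I" using efg by simp
    show "I - {f} = IP \<union> IQ" using Ipart disj by auto
    show "IP \<inter> IQ = {}" "f \<notin> IP" "f \<notin> IQ" "card IP = card IQ" using disj pq by auto
    show "\<forall>u\<in>I. \<forall>v\<in>I. adj u v = (u \<in> IP \<and> v \<in> IQ \<or> u \<in> IQ \<and> v \<in> IP)"
    proof (intro ballI)
      fix u v assume uv: "u \<in> I" "v \<in> I"
      have symN: "NN Vp A k d a h h' \<Longrightarrow> NN Vp A k d a h' h" for h h' by (auto simp: NN_def)
      show "adj u v = (u \<in> IP \<and> v \<in> IQ \<or> u \<in> IQ \<and> v \<in> IP)"
      proof
        assume "u \<in> IP \<and> v \<in> IQ \<or> u \<in> IQ \<and> v \<in> IP"
        then show "adj u v" unfolding adj_def using cross symN disj by blast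
      next
        assume ad: "adj u v"
        have memX: "h \<in> IP \<union> {f} \<Longrightarrow> a h \<in> X" for h using X by (auto simp: IP_def)
        have memY: "h \<in> IQ \<union> {f} \<Longrightarrow> a h \<in> Y" for h using Y by (auto simp: IQ_def)
        show "u \<in> IP \<and> v \<in> IQ \<or> u \<in> IQ \<and> v \<in> IP"
        proof (rule ccontr)
          assume nc: "\<not> ?thesis"
          have "(u \<in> IP \<union> {f} \<and> v \<in> IP \<union> {f}) \<or> (u \<in> IQ \<union> {f} \<and> v \<in> IQ \<union> {f})"
            using nc uv Ipart by auto
          then have "NN Vp A k d a u v" using NX memX NY memY by blast
          then show False using ad by (simp add: adj_def)
        qed
      qed
    qed
  qed
  then show ?thesis using oddI by blast
qed



abbreviation ind :: "bool \<Rightarrow> nat" where "ind b \<equiv> (if b then 1 else 0)"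

lemma card_ind:
  assumes "finite E" shows "card {e\<in>E. P e} = (\<Sum>e\<in>E. ind (P e))"
proof -
  have "card {e\<in>E. P e} = (\<Sum>e\<in>{e\<in>E. P e}. (1::nat))" by simp
  also have "\<dots> = (\<Sum>e\<in>E. if P e then 1 else 0)" by (rule sum.inter_filter[OF assms])
  finally show ?thesis .
qed

lemma cutsz_sum: "multigraph G \<Longrightarrow> cutsz G X = (\<Sum>e\<in>edges G. ind (crosses (ends G) X e))"
  unfolding cutsz_def cut_edges_def using mg_fin by (blast intro: card_ind)

lemma inc_ends:
  assumes mg: "multigraph G" and e: "e \<in> incident_edges G s"
  shows "(ends G e = (s, other_end G s e) \<or> ends G e = (other_end G s e, s))
     \<and> other_end G s e \<noteq> s \<and> other_end G s e \<in> verts G \<and> e \<in> edges G"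
proof -
  have eE: "e \<in> edges G" using e by (simp add: incident_edges_def)
  note m = mg_ends[OF mg eE]
  show ?thesis using e m eE
    by (cases "ends G e") (auto simp: incident_edges_def other_end_def)
qed

lemma d_id1:
  assumes mg: "multigraph G"
  shows "cutsz G (X \<inter> Y) + cutsz G (X \<union> Y) \<le> cutsz G X + cutsz G Y"
proof -
  have "\<forall>e\<in>edges G. ind (crosses (ends G) (X \<inter> Y) e) + ind (crosses (ends G) (X \<union> Y) e)
      \<le> ind (crosses (ends G) X e) + ind (crosses (ends G) Y e)"
    by (auto simp: crosses_def)
  then have "(\<Sum>e\<in>edges G. ind (crosses (ends G) (X \<inter> Y) e) + ind (crosses (ends G) (X \<union> Y) e))
      \<le> (\<Sum>e\<in>edges G. ind (crosses (ends G) X e) + ind (crosses (ends G) Y e))"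
    by (intro sum_mono) auto
  then show ?thesis unfolding cutsz_sum[OF mg] sum.distrib by simp
qed

lemma d_par:
  assumes mg: "multigraph G" and XY: "X \<inter> Y = {}"
  shows "even (cutsz G X + cutsz G Y + cutsz G (X \<union> Y))"
proof -
  have "\<forall>e\<in>edges G. even (ind (crosses (ends G) X e) + ind (crosses (ends G) Y e) + ind (crosses (ends G) (X \<union> Y) e))"
    using XY by (auto simp: crosses_def)
  then have "even (\<Sum>e\<in>edges G. ind (crosses (ends G) X e) + ind (crosses (ends G) Y e) + ind (crosses (ends G) (X \<union> Y) e))"
    by (intro dvd_sum) auto
  then show ?thesis unfolding cutsz_sum[OF mg] sum.distrib by simp
qed

lemma d_id2:
  assumes mg: "multigraph G" and XV: "X \<subseteq> verts G - {s}" and YV: "Y \<subseteq> verts G - {s}"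
  shows "cutsz G (X - Y) + cutsz G (Y - X) + 2 * card {h\<in>incident_edges G s. other_end G s h \<in> X \<inter> Y}
      \<le> cutsz G X + cutsz G Y"
proof -
  let ?I = "incident_edges G s"
  let ?a = "other_end G s"
  have IE: "?I \<subseteq> edges G" by (auto simp: incident_edges_def)
  have fin: "finite (edges G)" using mg_fin[OF mg] by simp
  have cI: "card {h\<in>?I. ?a h \<in> X \<inter> Y} = (\<Sum>e\<in>edges G. ind (e \<in> ?I \<and> ?a e \<in> X \<inter> Y))"
  proof -
    have "{h\<in>?I. ?a h \<in> X \<inter> Y} = {e\<in>edges G. e \<in> ?I \<and> ?a e \<in> X \<inter> Y}" using IE by auto
    then show ?thesis using card_ind[OF fin] by simp
  qed
  have pe: "ind (crosses (ends G) (X - Y) e) + ind (crosses (ends G) (Y - X) e) + 2 * ind (e \<in> ?I \<and> ?a e \<in> X \<inter> Y)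
      \<le> ind (crosses (ends G) X e) + ind (crosses (ends G) Y e)" if "e \<in> edges G" for e
  proof (cases "e \<in> ?I \<and> ?a e \<in> X \<inter> Y")
    case True
    then have "ends G e = (s, ?a e) \<or> ends G e = (?a e, s)" using inc_ends[OF mg] by blast
    moreover have "s \<notin> X" "s \<notin> Y" using XV YV by auto
    ultimately show ?thesis using True by (auto simp: crosses_def)
  next
    case False
    then show ?thesis by (auto simp: crosses_def)
  qed
  have "(\<Sum>e\<in>edges G. ind (crosses (ends G) (X - Y) e) + ind (crosses (ends G) (Y - X) e) + 2 * ind (e \<in> ?I \<and> ?a e \<in> X \<inter> Y))
      \<le> (\<Sum>e\<in>edges G. ind (crosses (ends G) X e) + ind (crosses (ends G) Y e))"
    using pe by (intro sum_mono) auto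
  then show ?thesis unfolding cutsz_sum[OF mg] cI sum.distrib sum_distrib_left by simp
qed

lemma d_comp:
  assumes mg: "multigraph G" and XV: "X \<subseteq> verts G - {s}"
  shows "cutsz G (verts G - {s} - X) + 2 * card {h\<in>incident_edges G s. other_end G s h \<in> X}
      = cutsz G X + card (incident_edges G s)"
proof -
  let ?I = "incident_edges G s"
  let ?a = "other_end G s"
  let ?V = "verts G - {s}"
  have IE: "?I \<subseteq> edges G" by (auto simp: incident_edges_def)
  have fin: "finite (edges G)" using mg_fin[OF mg] by simp
  have cI: "card {h\<in>?I. ?a h \<in> X} = (\<Sum>e\<in>edges G. ind (e \<in> ?I \<and> ?a e \<in> X))"
  proof -
    have "{h\<in>?I. ?a h \<in> X} = {e\<in>edges G. e \<in> ?I \<and> ?a e \<in> X}" using IE by auto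
    then show ?thesis using card_ind[OF fin] by simp
  qed
  have cI2: "card ?I = (\<Sum>e\<in>edges G. ind (e \<in> ?I))"
  proof -
    have "?I = {e\<in>edges G. e \<in> ?I}" using IE by auto
    then show ?thesis using card_ind[OF fin, of "\<lambda>e. e \<in> ?I"] by simp
  qed
  have pe: "ind (crosses (ends G) (?V - X) e) + 2 * ind (e \<in> ?I \<and> ?a e \<in> X)
      = ind (crosses (ends G) X e) + ind (e \<in> ?I)" if eE: "e \<in> edges G" for e
  proof (cases "e \<in> ?I")
    case True
    then have en: "ends G e = (s, ?a e) \<or> ends G e = (?a e, s)" and ns: "?a e \<noteq> s" and av: "?a e \<in> verts G"
      using inc_ends[OF mg] by blast+
    have sX: "s \<notin> X" using XV by auto
    have "(?a e \<in> ?V - X) \<longleftrightarrow> \<not> (?a e \<in> X)" using ns av by blast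
    moreover have "s \<notin> ?V - X" by simp
    ultimately have "crosses (ends G) (?V - X) e \<longleftrightarrow> ?a e \<notin> X"
      "crosses (ends G) X e \<longleftrightarrow> ?a e \<in> X"
      using en sX unfolding crosses_def by (elim disjE; simp)+
    then have "ind (crosses (ends G) (?V - X) e) = ind (?a e \<notin> X)"
      "ind (crosses (ends G) X e) = ind (?a e \<in> X)" by simp_all
    then show ?thesis using True by simp
  next
    case False
    then have "fst (ends G e) \<noteq> s" "snd (ends G e) \<noteq> s" using eE by (auto simp: incident_edges_def)
    moreover note mg_ends[OF mg eE]
    ultimately show ?thesis using False XV by (auto simp: crosses_def)
  qed
  have "(\<Sum>e\<in>edges G. ind (crosses (ends G) (?V - X) e) + 2 * ind (e \<in> ?I \<and> ?a e \<in> X))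
      = (\<Sum>e\<in>edges G. ind (crosses (ends G) X e) + ind (e \<in> ?I))"
    using pe by (intro sum.cong) auto
  then show ?thesis unfolding cutsz_sum[OF mg] cI cI2 sum.distrib sum_distrib_left by simp
qed



lemma lift_simps:
  "other_end G s e = other_end G s f \<Longrightarrow> verts (lift G s e f) = verts G \<and> edges (lift G s e f) = edges G - {e, f} \<and> ends (lift G s e f) = ends G"
  "other_end G s e \<noteq> other_end G s f \<Longrightarrow> verts (lift G s e f) = verts G \<and> edges (lift G s e f) = edges G - {f} \<and>
     ends (lift G s e f) = (ends G)(e := (other_end G s e, other_end G s f))"
  by (simp_all add: lift_def Let_def)

lemma lift_verts: "verts (lift G s e f) = verts G"
  by (cases "other_end G s e = other_end G s f") (simp_all add: lift_simps)

lemma lift_mg: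
  assumes mg: "multigraph G" and e: "e \<in> incident_edges G s" and f: "f \<in> incident_edges G s"
  shows "multigraph (lift G s e f)"
proof (cases "other_end G s e = other_end G s f")
  case True
  then show ?thesis using mg lift_simps(1)[OF True] by (auto simp: multigraph_def)
next
  case False
  have x: "other_end G s e \<in> verts G" and y: "other_end G s f \<in> verts G"
    using inc_ends[OF mg e] inc_ends[OF mg f] by blast+
  show ?thesis using mg lift_simps(2)[OF False] x y False by (auto simp: multigraph_def)
qed

lemma cut_compl:
  assumes "multigraph H"
  shows "cut_edges H X = cut_edges H (verts H - X)"
  using assms by (auto simp: cut_edges_def crosses_def multigraph_def)

lemma lift_cut:
  assumes mg: "multigraph G" and e: "e \<in> incident_edges G s" and f: "f \<in> incident_edges G s"
    and ef: "e \<noteq> f" and sX: "s \<notin> X"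
  shows "cutsz (lift G s e f) X + 2 * ind (other_end G s e \<in> X \<and> other_end G s f \<in> X) = cutsz G X"
proof -
  define x where "x = other_end G s e"
  define y where "y = other_end G s f"
  define L where "L = lift G s e f"
  have ex: "ends G e = (s, x) \<or> ends G e = (x, s)" "e \<in> edges G"
    using inc_ends[OF mg e] by (auto simp: x_def)
  have fy: "ends G f = (s, y) \<or> ends G f = (y, s)" "f \<in> edges G"
    using inc_ends[OF mg f] by (auto simp: y_def)
  have finG: "finite (cut_edges G X)" using mg_fin[OF mg] by (auto simp: cut_edges_def)
  have mgL: "multigraph L" unfolding L_def by (rule lift_mg[OF mg e f])
  have finL: "finite (cut_edges L X)" using mg_fin[OF mgL] by (auto simp: cut_edges_def)
  have cre: "crosses (ends G) X e \<longleftrightarrow> x \<in> X" using ex sX unfolding crosses_def by (elim disjE; simp)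
  have crf: "crosses (ends G) X f \<longleftrightarrow> y \<in> X" using fy sX unfolding crosses_def by (elim disjE; simp)
  have G1: "cut_edges G X \<inter> {e, f} = (if x \<in> X then {e} else {}) \<union> (if y \<in> X then {f} else {})"
    using cre crf ex fy by (auto simp: cut_edges_def)
  have G1c: "card (cut_edges G X \<inter> {e, f}) = ind (x \<in> X) + ind (y \<in> X)"
    unfolding G1 using ef by auto
  have same: "cut_edges L X - {e, f} = cut_edges G X - {e, f}"
  proof (cases "x = y")
    case True
    then show ?thesis using lift_simps(1)[of G s e f] by (auto simp: L_def x_def y_def cut_edges_def)
  next
    case False
    then show ?thesis using lift_simps(2)[of G s e f] by (auto simp: L_def x_def y_def cut_edges_def crosses_def)
  qed
  have L1c: "card (cut_edges L X \<inter> {e, f}) = (if x = y then 0 else ind ((x \<in> X) \<noteq> (y \<in> X)))"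
  proof (cases "x = y")
    case True
    then have "cut_edges L X \<inter> {e, f} = {}"
      using lift_simps(1)[of G s e f] by (auto simp: L_def x_def y_def cut_edges_def)
    then show ?thesis using True by simp
  next
    case False
    then have "cut_edges L X \<inter> {e, f} = (if (x \<in> X) \<noteq> (y \<in> X) then {e} else {})"
      using lift_simps(2)[of G s e f] ex by (auto simp: L_def x_def y_def cut_edges_def crosses_def)
    then show ?thesis using False by simp
  qed
  have "cutsz G X = card (cut_edges G X \<inter> {e, f}) + card (cut_edges G X - {e, f})"
    unfolding cutsz_def by (rule card_Int_Diff[OF finG])
  moreover have "cutsz L X = card (cut_edges L X \<inter> {e, f}) + card (cut_edges L X - {e, f})"
    unfolding cutsz_def by (rule card_Int_Diff[OF finL])
  ultimately show ?thesis using G1c L1c same unfolding L_def[symmetric] x_def[symmetric] y_def[symmetric]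
    by (cases "x = y") auto
qed



lemma adm_iff:
  fixes G :: "('v, 'e) mgraph"
  assumes mg: "multigraph G" and AV: "A \<subseteq> verts G - {s}"
    and H: "\<forall>X. sep (verts G - {s}) A X \<longrightarrow> 2 * k \<le> cutsz G X"
    and u: "u \<in> incident_edges G s" and v: "v \<in> incident_edges G s"
  shows "admissible G s (tau A k) u v \<longleftrightarrow> (u \<noteq> v \<and> \<not> NN (verts G - {s}) A k (cutsz G) (other_end G s) u v)"
proof (cases "u = v")
  case True
  then show ?thesis by (simp add: admissible_def)
next
  case uv: False
  define L where "L = lift G s u v"
  define Vp where "Vp = verts G - {s}"
  have mgL: "multigraph L" unfolding L_def by (rule lift_mg[OF mg u v])
  have VL: "verts L = verts G" by (simp add: L_def lift_verts)
  have lc: "cutsz L Y + 2 * ind (other_end G s u \<in> Y \<and> other_end G s v \<in> Y) = cutsz G Y" if "Y \<subseteq> Vp" for Y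
    unfolding L_def by (rule lift_cut[OF mg u v uv]) (use that in \<open>auto simp: Vp_def\<close>)
  have adm: "admissible G s (tau A k) u v \<longleftrightarrow>
      (\<forall>x\<in>verts G - {s}. \<forall>y\<in>verts G - {s}. x \<noteq> y \<longrightarrow> tau A k x y \<le> lam L x y)"
    using u v uv by (simp add: admissible_def L_def)
  show ?thesis
  proof
    assume a: "admissible G s (tau A k) u v"
    show "u \<noteq> v \<and> \<not> NN (verts G - {s}) A k (cutsz G) (other_end G s) u v"
    proof (intro conjI)
      show "u \<noteq> v" by (rule uv)
    next
      show "\<not> NN (verts G - {s}) A k (cutsz G) (other_end G s) u v"
      proof
      assume "NN (verts G - {s}) A k (cutsz G) (other_end G s) u v"
      then obtain X where X: "sep Vp A X" "cutsz G X \<le> 2 * k + 1" "other_end G s u \<in> X" "other_end G s v \<in> X"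
        by (auto simp: NN_def dang_def Vp_def)
      then obtain p q where pq: "p \<in> X" "p \<in> A" "q \<in> A" "q \<notin> X" and XV: "X \<subseteq> Vp" by (auto simp: sep_def)
      have pqV: "p \<in> verts G - {s}" "q \<in> verts G - {s}" "p \<noteq> q" using pq AV by auto
      have "tau A k p q \<le> lam L p q" using a adm pqV by blast
      then have "2 * k \<le> lam L p q" using pq by (simp add: tau_def)
      then have "2 * k \<le> cutsz L X" using lam_le_cut[OF mgL pqV(3) pq(1) pq(4)] by simp
      moreover have "cutsz L X + 2 = cutsz G X" using lc[OF XV] X by simp
      ultimately show False using X(2) by linarith
      qed
    qed
  next
    assume r: "u \<noteq> v \<and> \<not> NN (verts G - {s}) A k (cutsz G) (other_end G s) u v"
    have K: "2 * k \<le> cutsz L Y" if Y: "sep Vp A Y" for Y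
    proof -
      have YV: "Y \<subseteq> Vp" using Y by (auto simp: sep_def)
      have hY: "2 * k \<le> cutsz G Y" using H Y by (simp add: Vp_def)
      show ?thesis
      proof (cases "other_end G s u \<in> Y \<and> other_end G s v \<in> Y")
        case True
        then have "\<not> cutsz G Y \<le> 2 * k + 1" using r Y by (auto simp: NN_def dang_def Vp_def)
        then show ?thesis using lc[OF YV] True by simp
      next
        case False
        then have "ind (other_end G s u \<in> Y \<and> other_end G s v \<in> Y) = 0" by simp
        then show ?thesis using lc[OF YV] hY by simp
      qed
    qed
    show "admissible G s (tau A k) u v" unfolding adm
    proof (intro ballI impI)
      fix x y assume xy: "x \<in> verts G - {s}" "y \<in> verts G - {s}" "x \<noteq> y"
      show "tau A k x y \<le> lam L x y"
      proof (cases "x \<in> A \<and> y \<in> A")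
        case False then show ?thesis by (auto simp: tau_def)
      next
        case True
        have "\<forall>Z. x \<in> Z \<longrightarrow> y \<notin> Z \<longrightarrow> 2 * k \<le> cutsz L Z"
        proof (intro allI impI)
          fix Z assume Z: "x \<in> Z" "y \<notin> Z"
          define Z0 where "Z0 = Z \<inter> verts G"
          have c0: "cutsz L Z = cutsz L Z0"
            unfolding cutsz_def Z0_def using cut_restrict[OF mgL, of Z] VL by simp
          show "2 * k \<le> cutsz L Z"
          proof (cases "s \<in> Z0")
            case False
            have "sep Vp A Z0" using False Z xy True by (intro sepI[of _ _ x _ y]) (auto simp: Z0_def Vp_def)
            then show ?thesis using K c0 by simp
          next
            case sZ: True
            have c1: "cutsz L Z0 = cutsz L (verts G - Z0)"
              unfolding cutsz_def using cut_compl[OF mgL, of Z0] VL by simp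
            have "sep Vp A (verts G - Z0)" using sZ Z xy True by (intro sepI[of _ _ y _ x]) (auto simp: Z0_def Vp_def)
            then show ?thesis using K c0 c1 by simp
          qed
        qed
        then have "2 * k \<le> lam L x y" using lam_ge_iff_cut[OF mgL] xy VL by blast
        then show ?thesis by (simp add: tau_def)
      qed
    qed
  qed
qed

lemma cm_cong:
  assumes "\<forall>u\<in>V. \<forall>v\<in>V. adj1 u v = adj2 u v"
  shows "complete_multipartite V adj1 = complete_multipartite V adj2"
  using assms unfolding complete_multipartite_def by auto

lemma ipb_cong:
  assumes "\<forall>u\<in>V. \<forall>v\<in>V. adj1 u v = adj2 u v"
  shows "isolated_plus_balanced_bipartite V adj1 = isolated_plus_balanced_bipartite V adj2"
  using assms unfolding isolated_plus_balanced_bipartite_def by auto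

theorem theorem3p3:
  fixes G :: "('v, 'e) mgraph" and k :: nat and A :: "'v set" and s :: 'v
  assumes "multigraph G"
    and "k > 0"
    and "A \<subset> verts G"
    and "\<forall>x \<in> A. \<forall>y \<in> A. x \<noteq> y \<longrightarrow> lam G x y \<ge> 2 * k"
    and "\<forall>e \<in> edges G. fst (ends G e) \<in> A \<or> snd (ends G e) \<in> A"
    and "s \<in> verts G" and "s \<notin> A"
    and "degree G s > 3"
  shows "complete_multipartite (incident_edges G s) (admissible G s (tau A k))
      \<or> (isolated_plus_balanced_bipartite (incident_edges G s) (admissible G s (tau A k))
         \<and> odd (degree G s))"
proof -
  note mg = assms(1)
  define Vp where "Vp = verts G - {s}"
  define I where "I = incident_edges G s"
  define a where "a = other_end G s"
  define d where "d = cutsz G"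
  have AV: "A \<subseteq> Vp" using assms(3,7) by (auto simp: Vp_def)
  have finI: "finite I" using mg_fin[OF mg] by (auto simp: I_def incident_edges_def)
  have aA: "\<forall>h\<in>I. a h \<in> A"
  proof
    fix h assume h: "h \<in> I"
    then have hE: "h \<in> edges G" and hs: "fst (ends G h) = s \<or> snd (ends G h) = s"
      by (auto simp: I_def incident_edges_def)
    have "fst (ends G h) \<in> A \<or> snd (ends G h) \<in> A" using assms(5) hE by blast
    then show "a h \<in> A" using hs assms(7) by (auto simp: a_def other_end_def)
  qed
  have H: "\<forall>X. sep Vp A X \<longrightarrow> 2 * k \<le> d X"
  proof (intro allI impI)
    fix X assume "sep Vp A X"
    then obtain p q where pq: "p \<in> X" "p \<in> A" "q \<in> A" "q \<notin> X" by (auto simp: sep_def)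
    then have "p \<noteq> q" by auto
    then have "2 * k \<le> lam G p q" using assms(4) pq by blast
    then show "2 * k \<le> d X" using lam_le_cut[OF mg \<open>p \<noteq> q\<close> pq(1) pq(4)] by (simp add: d_def)
  qed
  have Id1: "\<forall>X Y. X \<subseteq> Vp \<longrightarrow> Y \<subseteq> Vp \<longrightarrow> d (X \<inter> Y) + d (X \<union> Y) \<le> d X + d Y"
    using d_id1[OF mg] by (simp add: d_def)
  have Id2: "\<forall>X Y. X \<subseteq> Vp \<longrightarrow> Y \<subseteq> Vp \<longrightarrow> d (X - Y) + d (Y - X) + 2 * card {h\<in>I. a h \<in> X \<inter> Y} \<le> d X + d Y"
    using d_id2[OF mg] by (simp add: d_def Vp_def I_def a_def)
  have Comp: "\<forall>X. X \<subseteq> Vp \<longrightarrow> d (Vp - X) + 2 * card {h\<in>I. a h \<in> X} = d X + card I"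
    using d_comp[OF mg] by (simp add: d_def Vp_def I_def a_def)
  have Par: "\<forall>X Y. X \<subseteq> Vp \<longrightarrow> Y \<subseteq> Vp \<longrightarrow> X \<inter> Y = {} \<longrightarrow> even (d X + d Y + d (X \<union> Y))"
    using d_par[OF mg] by (simp add: d_def)
  define adj where "adj = (\<lambda>h h'. h \<noteq> h' \<and> \<not> NN Vp A k d a h h')"
  have C: "complete_multipartite I adj \<or> (isolated_plus_balanced_bipartite I adj \<and> odd (card I))"
    unfolding adj_def by (rule core[OF finI aA AV H Id1 Id2 Comp Par])
  have eqadj: "\<forall>u\<in>I. \<forall>v\<in>I. admissible G s (tau A k) u v = adj u v"
  proof (intro ballI)
    fix u v assume "u \<in> I" "v \<in> I"
    then show "admissible G s (tau A k) u v = adj u v"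
      using adm_iff[where A=A and k=k and s=s and u=u and v=v, OF mg] AV H
      by (simp add: adj_def Vp_def I_def a_def d_def)
  qed
  show ?thesis
    using C cm_cong[OF eqadj] ipb_cong[OF eqadj]
    by (simp add: I_def degree_def)
qed


end
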